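(* Let $\Omega\subset\mathbb{R}^d$ be a bounded domain, $\kappa\in L^\infty(\Omega)$ with $\kappa\ge\kappa_0>0$, and $a(u,v)=\int_\Omega\kappa\nabla u\cdot\nabla v\,dx$, $\|u\|_a^2=a(u,u)$. Let $V_H\subset H^1_0(\Omega)$ be a finite-dimensional space with $V_H=V_{H,1}+V_{H,2}$ for subspaces $V_{H,1},V_{H,2}$, and define $$\gamma=\sup_{v_1\in V_{H,1},v_2\in V_{H,2}}\frac{(v_1,v_2)}{\|v_1\|\|v_2\|},\quad \gamma_a=\sup_{v_1\in V_{H,1},v_2\in V_{H,2}}\frac{a(v_1,v_2)}{\|v_1\|_a\|v_2\|_a},\quad \alpha=\sup_{v_2\in V_{H,2}}\frac{\|v_2\|_a}{\|v_2\|},$$ assuming $\gamma<1$ and $\gamma_a<1$. Let $\tau>0$, $N\ge2$, and let $u_{H,1}^n\in V_{H,1}$, $u_{H,2}^n\in V_{H,2}$ ($n=0,\dots,N$), $u_H^n=u_{H,1}^n+u_{H,2}^n$, satisfy for $n=1,\dots,N-1$: $$(u_H^{n+1}-2u_H^n+u_H^{n-1},w)+\frac{\tau^2}{2}a(u_{H,1}^{n+1}+u_{H,1}^{n-1}+2u_{H,2}^n,w)=0\quad\forall w\in V_{H,1},$$ $$(u_H^{n+1}-2u_H^n+u_H^{n-1},w)+\tau^2a(u_{H,1}^{n}+u_{H,2}^n,w)=0\quad\forall w\in V_{H,2}.$$ Let $E^{\frac12}=\|u_H^{1}-u_H^0\|^2+\frac{\tau^2}{2}\sum_{i=1,2}(\|u_{H,i}^{1}\|_a^2+\|u_{H,i}^0\|_a^2)+\tau^2a(u_{H,2}^{1},u_{H,1}^0)+\tau^2a(u_{H,1}^{1},u_{H,2}^0)-\frac{\tau^2}{2}\|u_{H,2}^{1}-u_{H,2}^0\|_a^2$.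 If $2(1-\gamma)\alpha^{-2}\ge\tau^2$, then for all $n=0,\dots,N-1$, $$\Big(1-\gamma^2-\frac{\alpha^2\tau^2}{2}\Big)\|u_{H,2}^{n+1}-u_{H,2}^n\|^2+\frac{\tau^2(1-\gamma_a)}{2}\sum_{i=1,2}\Big(\|u_{H,i}^{n+1}\|_a^2+\|u_{H,i}^n\|_a^2\Big)\le E^{\frac12}.$$
   Context: $(\cdot,\cdot)$ and $\|\cdot\|$ denote the $L^2(\Omega)$ inner product and norm. *)

theory Defs
  imports "HOL-Analysis.Analysis"
begin

text \<open>Functions on R^d are modelled as maps 'a \<Rightarrow> real with 'a a Euclidean space
 (d = DIM('a)).\<close>

fun Ck :: "nat \<Rightarrow> ('a::euclidean_space \<Rightarrow> real) \<Rightarrow> bool" where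
  "Ck 0 f = continuous_on UNIV f"
| "Ck (Suc k) f = ((\<forall>x. f differentiable (at x)) \<and>
      (\<forall>i\<in>Basis. Ck k (\<lambda>x. frechet_derivative f (at x) i)))"

definition test_fun :: "'a::euclidean_space set \<Rightarrow> ('a \<Rightarrow> real) \<Rightarrow> bool" where
  "test_fun \<Omega> \<phi> \<longleftrightarrow> (\<forall>k. Ck k \<phi>) \<and> compact (closure {x. \<phi> x \<noteq> 0})
      \<and> closure {x. \<phi> x \<noteq> 0} \<subseteq> \<Omega>"

definition grad :: "('a::euclidean_space \<Rightarrow> real) \<Rightarrow> 'a \<Rightarrow> 'a" where
  "grad f x = (\<Sum>i\<in>Basis. frechet_derivative f (at x) i *\<^sub>R i)"

definition L2_on :: "'a::euclidean_space set \<Rightarrow> ('a \<Rightarrow> real) \<Rightarrow> bool" where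
  "L2_on \<Omega> u \<longleftrightarrow> set_borel_measurable lebesgue \<Omega> u \<and>
      set_integrable lebesgue \<Omega> (\<lambda>x. (u x)\<^sup>2)"

definition weak_grad :: "'a::euclidean_space set \<Rightarrow> ('a \<Rightarrow> real) \<Rightarrow> ('a \<Rightarrow> 'a) \<Rightarrow> bool" where
  "weak_grad \<Omega> u g \<longleftrightarrow> (\<forall>i\<in>Basis. L2_on \<Omega> (\<lambda>x. g x \<bullet> i)) \<and>
     (\<forall>\<phi>. test_fun \<Omega> \<phi> \<longrightarrow> (\<forall>i\<in>Basis.
        (LINT x:\<Omega>|lebesgue. u x * (grad \<phi> x \<bullet> i)) = - (LINT x:\<Omega>|lebesgue. (g x \<bullet> i) * \<phi> x)))"

definition wgrad :: "'a::euclidean_space set \<Rightarrow> ('a \<Rightarrow> real) \<Rightarrow> 'a \<Rightarrow> 'a" where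
  "wgrad \<Omega> u = (SOME g. weak_grad \<Omega> u g)"

definition H10 :: "'a::euclidean_space set \<Rightarrow> ('a \<Rightarrow> real) set" where
  "H10 \<Omega> = {u. L2_on \<Omega> u \<and> (\<exists>g. weak_grad \<Omega> u g \<and>
      (\<exists>\<phi>::nat \<Rightarrow> 'a \<Rightarrow> real. (\<forall>k. test_fun \<Omega> (\<phi> k)) \<and>
        (\<lambda>k. (LINT x:\<Omega>|lebesgue. (\<phi> k x - u x)\<^sup>2 + (norm (grad (\<phi> k) x - g x))\<^sup>2))
          \<longlonglongrightarrow> 0))}"

definition l2ip :: "'a::euclidean_space set \<Rightarrow> ('a \<Rightarrow> real) \<Rightarrow> ('a \<Rightarrow> real) \<Rightarrow> real" where
  "l2ip \<Omega> u v = (LINT x:\<Omega>|lebesgue. u x * v x)"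

definition l2norm :: "'a::euclidean_space set \<Rightarrow> ('a \<Rightarrow> real) \<Rightarrow> real" where
  "l2norm \<Omega> u = sqrt (l2ip \<Omega> u u)"

definition aform :: "'a::euclidean_space set \<Rightarrow> ('a \<Rightarrow> real) \<Rightarrow> ('a \<Rightarrow> real) \<Rightarrow> ('a \<Rightarrow> real) \<Rightarrow> real" where
  "aform \<Omega> \<kappa> u v = (LINT x:\<Omega>|lebesgue. \<kappa> x * (wgrad \<Omega> u x \<bullet> wgrad \<Omega> v x))"

definition anorm :: "'a::euclidean_space set \<Rightarrow> ('a \<Rightarrow> real) \<Rightarrow> ('a \<Rightarrow> real) \<Rightarrow> real" where
  "anorm \<Omega> \<kappa> u = sqrt (aform \<Omega> \<kappa> u u)"

definition bounded_domain :: "'a::euclidean_space set \<Rightarrow> bool" where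
  "bounded_domain \<Omega> \<longleftrightarrow> open \<Omega> \<and> connected \<Omega> \<and> bounded \<Omega> \<and> \<Omega> \<noteq> {}"

definition Linf_on :: "'a::euclidean_space set \<Rightarrow> ('a \<Rightarrow> real) \<Rightarrow> bool" where
  "Linf_on \<Omega> \<kappa> \<longleftrightarrow> set_borel_measurable lebesgue \<Omega> \<kappa> \<and>
     (\<exists>C. AE x in lebesgue. x \<in> \<Omega> \<longrightarrow> \<bar>\<kappa> x\<bar> \<le> C)"

definition fun_subspace :: "('a \<Rightarrow> real) set \<Rightarrow> bool" where
  "fun_subspace V \<longleftrightarrow> (\<lambda>x. 0) \<in> V \<and> (\<forall>u\<in>V. \<forall>v\<in>V. (\<lambda>x. u x + v x) \<in> V) \<and>
     (\<forall>c::real. \<forall>u\<in>V. (\<lambda>x. c * u x) \<in> V)"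

definition fin_dim_fun_space :: "('a \<Rightarrow> real) set \<Rightarrow> bool" where
  "fin_dim_fun_space V \<longleftrightarrow> fun_subspace V \<and>
     (\<exists>B. finite B \<and> B \<subseteq> V \<and> V = {(\<lambda>x. \<Sum>b\<in>B. c b * b x) | c. True})"

definition fun_sum_space :: "('a \<Rightarrow> real) set \<Rightarrow> ('a \<Rightarrow> real) set \<Rightarrow> ('a \<Rightarrow> real) set" where
  "fun_sum_space V1 V2 = {(\<lambda>x. v1 x + v2 x) | v1 v2. v1 \<in> V1 \<and> v2 \<in> V2}"

end

theory Submission
  imports Defs "HOL-Computational_Algebra.Polynomial"
begin


definition smooth1 :: "(real \<Rightarrow> real) \<Rightarrow> bool" where
  "smooth1 g \<longleftrightarrow> (\<exists>S. g \<in> S \<and> (\<forall>f\<in>S. \<exists>f'\<in>S. \<forall>t. (f has_real_derivative f' t) (at t)))"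

lemma smooth1_deriv:
  assumes "smooth1 g"
  shows "\<exists>g'. smooth1 g' \<and> (\<forall>t. (g has_real_derivative g' t) (at t))"
  using assms unfolding smooth1_def by metis

lemma smooth1I:
  assumes "g \<in> S" "\<And>f. f \<in> S \<Longrightarrow> \<exists>f'\<in>S. \<forall>t. (f has_real_derivative f' t) (at t)"
  shows "smooth1 g"
  using assms unfolding smooth1_def by blast

inductive_set SC :: "(real \<Rightarrow> real) set" where
  base: "smooth1 f \<Longrightarrow> f \<in> SC"
| add: "f \<in> SC \<Longrightarrow> g \<in> SC \<Longrightarrow> (\<lambda>t. f t + g t) \<in> SC"
| mult: "f \<in> SC \<Longrightarrow> g \<in> SC \<Longrightarrow> (\<lambda>t. f t * g t) \<in> SC"
| scale: "f \<in> SC \<Longrightarrow> (\<lambda>t. c * f t) \<in> SC"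
| comp: "f \<in> SC \<Longrightarrow> (\<lambda>t. f (c * t + d)) \<in> SC"

lemma SC_deriv:
  assumes "f \<in> SC"
  shows "\<exists>f'\<in>SC. \<forall>t. (f has_real_derivative f' t) (at t)"
  using assms
proof induction
  case (base f)
  then show ?case using smooth1_deriv SC.base by blast
next
  case (add f g)
  then obtain f' g' where "f' \<in> SC" "g' \<in> SC" "\<And>t. (f has_real_derivative f' t) (at t)"
    "\<And>t. (g has_real_derivative g' t) (at t)" by blast
  then show ?case
    by (intro bexI[of _ "\<lambda>t. f' t + g' t"]) (auto intro!: derivative_eq_intros SC.add)
next
  case (mult f g)
  then obtain f' g' where "f' \<in> SC" "g' \<in> SC" "\<And>t. (f has_real_derivative f' t) (at t)"
    "\<And>t. (g has_real_derivative g' t) (at t)" by blast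
  then show ?case
    by (intro bexI[of _ "\<lambda>t. f' t * g t + f t * g' t"])
       (auto intro!: derivative_eq_intros SC.add SC.mult mult.IH mult.hyps)
next
  case (scale f c)
  then obtain f' where "f' \<in> SC" "\<And>t. (f has_real_derivative f' t) (at t)" by blast
  then show ?case
    by (intro bexI[of _ "\<lambda>t. c * f' t"]) (auto intro!: derivative_eq_intros SC.scale)
next
  case (comp f c d)
  then obtain f' where "f' \<in> SC" "\<And>t. (f has_real_derivative f' t) (at t)" by blast
  then show ?case
    apply (intro bexI[of _ "\<lambda>t. c * f' (c * t + d)"])
     apply (auto intro!: SC.scale SC.comp)
    apply (rule DERIV_chain2[of f, THEN DERIV_cong])
      apply assumption
     apply (auto intro!: derivative_eq_intros)
    done
qed

lemma SC_smooth1: "f \<in> SC \<Longrightarrow> smooth1 f"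
  by (rule smooth1I[of f SC]) (auto intro: SC_deriv)

lemma smooth1_continuous: "smooth1 f \<Longrightarrow> continuous_on UNIV f"
  by (metis DERIV_isCont continuous_at_imp_continuous_on smooth1_deriv)


lemma poly_exp_at_top: "((\<lambda>s. poly p s * exp (- s)) \<longlongrightarrow> (0::real)) at_top"
proof -
  have eq: "poly p s * exp (- s) = (\<Sum>i\<le>degree p. coeff p i * (s ^ i / exp s))" for s :: real
  proof -
    have "poly p s * exp (- s) = poly p s / exp s" by (simp add: exp_minus field_simps)
    then show ?thesis by (simp add: poly_altdef sum_divide_distrib)
  qed
  have "((\<lambda>s. \<Sum>i\<le>degree p. coeff p i * (s ^ i / exp s)) \<longlongrightarrow> (\<Sum>i\<le>degree p. coeff p i * 0)) at_top"
    by (intro tendsto_sum tendsto_mult tendsto_const tendsto_power_div_exp_0)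
  then show ?thesis unfolding eq by simp
qed

lemma poly_exp_at_right: "((\<lambda>t. poly p (inverse t) * exp (- inverse t)) \<longlongrightarrow> (0::real)) (at_right 0)"
  using filterlim_compose[OF poly_exp_at_top filterlim_inverse_at_top_right] by (simp add: o_def)

definition ef :: "real poly \<Rightarrow> real \<Rightarrow> real" where
  "ef p t = (if t > 0 then poly p (inverse t) * exp (- inverse t) else 0)"

definition efq :: "real poly \<Rightarrow> real poly" where
  "efq p = [:0,0,1:] * (p - pderiv p)"

lemma ef_deriv: "(ef p has_real_derivative ef (efq p) t) (at t)"
proof -
  consider "t > 0" | "t < 0" | "t = 0" by linarith
  then show ?thesis
  proof cases
    case 1
    have "((\<lambda>t. poly p (inverse t) * exp (- inverse t)) has_real_derivative
       poly (pderiv p) (inverse t) * (- (inverse t ^ 2)) * exp (- inverse t) +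
       poly p (inverse t) * (exp (- inverse t) * (inverse t ^ 2))) (at t)"
    proof -
      have inv: "(inverse has_real_derivative - (inverse t ^ 2)) (at t)"
        using DERIV_inverse[of t] 1 by (simp add: power2_eq_square)
      have d1: "((\<lambda>t. poly p (inverse t)) has_real_derivative poly (pderiv p) (inverse t) * (- (inverse t ^ 2))) (at t)"
        by (rule DERIV_chain2[OF poly_DERIV inv])
      have "((\<lambda>t. exp (- inverse t)) has_real_derivative exp (- inverse t) * (- (- (inverse t ^ 2)))) (at t)"
        by (rule DERIV_chain2[OF DERIV_exp DERIV_minus[OF inv]])
      then have d2: "((\<lambda>t. exp (- inverse t)) has_real_derivative exp (- inverse t) * (inverse t ^ 2)) (at t)"
        by simp
      show ?thesis by (rule DERIV_cong[OF DERIV_mult[OF d1 d2]]) (simp add: algebra_simps)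
    qed
    moreover have "poly (pderiv p) (inverse t) * (- (inverse t ^ 2)) * exp (- inverse t) +
       poly p (inverse t) * (exp (- inverse t) * (inverse t ^ 2)) = ef (efq p) t"
      using 1 by (simp add: ef_def efq_def algebra_simps power2_eq_square)
    ultimately have "((\<lambda>t. poly p (inverse t) * exp (- inverse t)) has_real_derivative ef (efq p) t) (at t)"
      by simp
    then show ?thesis
      by (rule has_field_derivative_transform_within_open[where S="{0<..}"]) (use 1 in \<open>auto simp: ef_def\<close>)
  next
    case 2
    have "((\<lambda>t. 0) has_real_derivative ef (efq p) t) (at t)" using 2 by (simp add: ef_def)
    then show ?thesis
      by (rule has_field_derivative_transform_within_open[where S="{..<0}"]) (use 2 in \<open>auto simp: ef_def\<close>)
  next
    case 3
    have "((\<lambda>h. (ef p (0 + h) - ef p 0) / h) \<longlongrightarrow> 0) (at 0)"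
    proof (rule filterlim_split_at)
      show "((\<lambda>h. (ef p (0 + h) - ef p 0) / h) \<longlongrightarrow> 0) (at_left 0)"
        by (rule tendsto_eventually) (auto simp: ef_def eventually_at_left_field intro!: exI[of _ "-1"])
      have "((\<lambda>t. poly (pCons 0 p) (inverse t) * exp (- inverse t)) \<longlongrightarrow> (0::real)) (at_right 0)"
        by (rule poly_exp_at_right)
      moreover have "\<forall>\<^sub>F h in at_right 0. poly (pCons 0 p) (inverse h) * exp (- inverse h) = (ef p (0 + h) - ef p 0) / h"
        by (auto simp: ef_def eventually_at_right_field field_simps intro!: exI[of _ 1])
      ultimately show "((\<lambda>h. (ef p (0 + h) - ef p 0) / h) \<longlongrightarrow> 0) (at_right 0)"
        by (rule Lim_transform_eventually)
    qed
    moreover have "ef (efq p) 0 = 0" by (simp add: ef_def)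
    ultimately show ?thesis using 3 by (simp add: DERIV_def)
  qed
qed

lemma ef_smooth1: "smooth1 (ef p)"
  by (rule smooth1I[of _ "range ef"]) (auto intro: ef_deriv)

lemma ef_nonneg: "ef p t \<ge> 0" if "\<forall>s. poly p s \<ge> 0"
  using that by (simp add: ef_def)

definition E0 :: "real \<Rightarrow> real" where "E0 = ef 1"

lemma E0_simp: "E0 t = (if t > 0 then exp (- inverse t) else 0)"
  by (simp add: E0_def ef_def)

lemma E0_SC: "E0 \<in> SC"
  unfolding E0_def by (rule SC.base[OF ef_smooth1])


definition bump :: "real \<Rightarrow> real" where "bump t = E0 t * E0 (1 - t)"

lemma bump_SC: "bump \<in> SC"
proof -
  have "(\<lambda>t. E0 ((-1) * t + 1)) \<in> SC" by (rule SC.comp[OF E0_SC])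
  then have "(\<lambda>t. E0 t * E0 ((-1) * t + 1)) \<in> SC" by (rule SC.mult[OF E0_SC])
  then show ?thesis unfolding bump_def[abs_def] by simp
qed

lemma bump_cont: "continuous_on UNIV bump"
  by (rule smooth1_continuous[OF SC_smooth1[OF bump_SC]])

lemma bump_nonneg: "bump t \<ge> 0"
  by (simp add: bump_def E0_simp)

lemma bump_zero: "t \<le> 0 \<or> t \<ge> 1 \<Longrightarrow> bump t = 0"
  by (auto simp add: bump_def E0_simp)

lemma bump_pos: "0 < t \<Longrightarrow> t < 1 \<Longrightarrow> bump t > 0"
  by (simp add: bump_def E0_simp)

definition cb :: real where "cb = integral {-1..1} bump"

lemma bump_int: "bump integrable_on {a..b}"
  by (rule integrable_continuous_real) (rule continuous_on_subset[OF bump_cont], simp)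

lemma cb_pos: "cb > 0"
proof -
  have "integral {-1..1} bump \<noteq> 0"
  proof
    assume "integral {-1..1} bump = 0"
    then have "\<forall>x\<in>{-1..1}. bump x = 0"
      using integral_eq_0_iff[of "-1" 1 bump] bump_nonneg continuous_on_subset[OF bump_cont] by auto
    then show False using bump_pos[of "1/2"] by auto
  qed
  moreover have "integral {-1..1} bump \<ge> 0"
    by (rule integral_nonneg[OF bump_int]) (simp add: bump_nonneg)
  ultimately show ?thesis unfolding cb_def by simp
qed

definition St :: "real \<Rightarrow> real" where "St t = integral {-1..t} bump / cb"

lemma int_bump_0: "t \<le> 0 \<Longrightarrow> integral {-1..t} bump = 0"
  by (rule integral_unique, rule has_integral_is_0) (auto intro: bump_zero)

lemma int_bump_1: "t \<ge> 1 \<Longrightarrow> integral {-1..t} bump = cb"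
proof -
  assume t: "t \<ge> 1"
  have "integral {-1..1} bump + integral {1..t} bump = integral {-1..t} bump"
    by (rule Henstock_Kurzweil_Integration.integral_combine) (use t bump_int in auto)
  moreover have "integral {1..t} bump = 0"
    by (rule integral_unique, rule has_integral_is_0) (auto intro: bump_zero)
  ultimately show ?thesis unfolding cb_def by simp
qed

lemma St_0: "t \<le> 0 \<Longrightarrow> St t = 0"
  by (simp add: St_def int_bump_0)

lemma St_1: "t \<ge> 1 \<Longrightarrow> St t = 1"
  using cb_pos by (simp add: St_def int_bump_1)

lemma St_range: "0 \<le> St t \<and> St t \<le> 1"
proof (cases "t \<le> 0")
  case True then show ?thesis by (simp add: St_0)
next
  case f: False
  show ?thesis
  proof (cases "t \<ge> 1")
    case True then show ?thesis by (simp add: St_1)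
  next
    case False
    have "integral {-1..t} bump + integral {t..1} bump = integral {-1..1} bump"
      by (rule Henstock_Kurzweil_Integration.integral_combine) (use f False bump_int in auto)
    moreover have "integral {t..1} bump \<ge> 0" "integral {-1..t} bump \<ge> 0"
      by (auto intro!: integral_nonneg bump_int bump_nonneg)
    ultimately show ?thesis using cb_pos unfolding St_def cb_def by (auto simp: divide_simps)
  qed
qed

lemma St_deriv: "(St has_real_derivative bump t / cb) (at t)"
proof (cases "t < 0")
  case True
  have "((\<lambda>t. 0) has_real_derivative bump t / cb) (at t)" using True bump_zero[of t] by simp
  then show ?thesis
    by (rule has_field_derivative_transform_within_open[where S="{..<0}"]) (use True St_0 in auto)
next
  case False
  have "((\<lambda>x. integral {-1..x} bump) has_real_derivative bump t) (at t within {-1..t+1})"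
    by (rule integral_has_real_derivative) (use False continuous_on_subset[OF bump_cont] in auto)
  then have "((\<lambda>x. integral {-1..x} bump) has_real_derivative bump t) (at t within {-1<..<t+1})"
    by (rule has_field_derivative_subset) auto
  then have "((\<lambda>x. integral {-1..x} bump) has_real_derivative bump t) (at t)"
    using False by (subst (asm) at_within_open) auto
  then show ?thesis unfolding St_def[abs_def]
    by (intro derivative_eq_intros) (use cb_pos in auto)
qed

lemma St_SC: "St \<in> SC"
proof -
  have "(\<lambda>t. inverse cb * bump t) \<in> SC" by (rule SC.scale[OF bump_SC])
  then have "smooth1 (\<lambda>t. inverse cb * bump t)" by (rule SC_smooth1)
  have "smooth1 St"
  proof (rule smooth1I[of _ "insert St (Collect smooth1)"])
    fix f assume "f \<in> insert St (Collect smooth1)"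
    then show "\<exists>f'\<in>insert St (Collect smooth1). \<forall>t. (f has_real_derivative f' t) (at t)"
    proof
      assume "f = St"
      then show ?thesis
        using St_deriv \<open>smooth1 (\<lambda>t. inverse cb * bump t)\<close>
        by (intro bexI[of _ "\<lambda>t. inverse cb * bump t"]) (auto simp: field_simps)
    next
      assume "f \<in> Collect smooth1"
      then show ?thesis using smooth1_deriv by fastforce
    qed
  qed simp
  then show ?thesis by (rule SC.base)
qed


lemma Ck_class:
  fixes S :: "('a::euclidean_space \<Rightarrow> real) set"
  assumes cl: "\<And>f. f \<in> S \<Longrightarrow> continuous_on UNIV f \<and> (\<forall>x. f differentiable (at x)) \<and>
        (\<forall>i\<in>Basis. (\<lambda>x. frechet_derivative f (at x) i) \<in> S)"
  shows "f \<in> S \<Longrightarrow> Ck k f"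
proof (induction k arbitrary: f)
  case 0 then show ?case using cl by simp
next
  case (Suc k) then show ?case using cl by simp
qed

definition prodfun :: "('a::euclidean_space \<Rightarrow> real \<Rightarrow> real) \<Rightarrow> 'a \<Rightarrow> real" where
  "prodfun G = (\<lambda>x. \<Prod>i\<in>Basis. G i (x \<bullet> i))"

lemma prodfun_deriv:
  fixes G G' :: "'a::euclidean_space \<Rightarrow> real \<Rightarrow> real"
  assumes d: "\<And>i t. i \<in> Basis \<Longrightarrow> (G i has_real_derivative G' i t) (at t)"
  shows "(prodfun G has_derivative
     (\<lambda>y. \<Sum>i\<in>Basis. (G' i (x \<bullet> i) * (y \<bullet> i)) * (\<Prod>j\<in>Basis - {i}. G j (x \<bullet> j)))) (at x)"
  unfolding prodfun_def
proof (rule has_derivative_prod)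
  fix i :: 'a assume i: "i \<in> Basis"
  have "((\<lambda>x. x \<bullet> i) has_derivative (\<lambda>y. y \<bullet> i)) (at x)"
    by (rule bounded_linear_imp_has_derivative) (rule bounded_linear_inner_left)
  moreover have "(G i has_derivative (\<lambda>h. G' i (x \<bullet> i) * h)) (at (x \<bullet> i))"
    using d[OF i] by (simp add: has_field_derivative_def mult_commute_abs)
  ultimately show "((\<lambda>x. G i (x \<bullet> i)) has_derivative (\<lambda>y. G' i (x \<bullet> i) * (y \<bullet> i))) (at x)"
    by (rule has_derivative_compose)
qed

lemma prodfun_partial:
  fixes G G' :: "'a::euclidean_space \<Rightarrow> real \<Rightarrow> real"
  assumes d: "\<And>i t. i \<in> Basis \<Longrightarrow> (G i has_real_derivative G' i t) (at t)"
    and j: "j \<in> Basis"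
  shows "(\<lambda>x. frechet_derivative (prodfun G) (at x) j) = prodfun (G(j := G' j))"
proof
  fix x :: 'a
  have "frechet_derivative (prodfun G) (at x) j =
     (\<Sum>i\<in>Basis. (G' i (x \<bullet> i) * (j \<bullet> i)) * (\<Prod>l\<in>Basis - {i}. G l (x \<bullet> l)))"
  proof -
    have "frechet_derivative (prodfun G) (at x) = (\<lambda>y. \<Sum>i\<in>Basis. (G' i (x \<bullet> i) * (y \<bullet> i)) * (\<Prod>j\<in>Basis - {i}. G j (x \<bullet> j)))"
      by (rule frechet_derivative_at[OF prodfun_deriv[OF d], symmetric])
    then show ?thesis by simp
  qed
  also have "\<dots> = (\<Sum>i\<in>Basis. if i = j then G' j (x \<bullet> j) * (\<Prod>l\<in>Basis - {j}. G l (x \<bullet> l)) else 0)"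
    by (rule sum.cong) (use j in \<open>simp_all add: inner_Basis\<close>)
  also have "\<dots> = G' j (x \<bullet> j) * (\<Prod>l\<in>Basis - {j}. G l (x \<bullet> l))"
    using j by (simp add: sum.delta')
  also have "\<dots> = prodfun (G(j := G' j)) x"
  proof -
    have "prodfun (G(j := G' j)) x = (G(j := G' j)) j (x \<bullet> j) * (\<Prod>l\<in>Basis-{j}. (G(j := G' j)) l (x \<bullet> l))"
      unfolding prodfun_def by (rule prod.remove) (simp_all add: j)
    also have "(\<Prod>l\<in>Basis-{j}. (G(j := G' j)) l (x \<bullet> l)) = (\<Prod>l\<in>Basis-{j}. G l (x \<bullet> l))"
      by (rule prod.cong) auto
    finally show ?thesis by (metis fun_upd_same)
  qed
  finally show "frechet_derivative (prodfun G) (at x) j = prodfun (G(j := G' j)) x" .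
qed

lemma prodfun_Ck:
  fixes G :: "'a::euclidean_space \<Rightarrow> real \<Rightarrow> real"
  assumes "\<forall>i\<in>Basis. smooth1 (G i)"
  shows "Ck k (prodfun G)"
proof -
  let ?S = "{prodfun G | G :: 'a \<Rightarrow> real \<Rightarrow> real. \<forall>i\<in>Basis. smooth1 (G i)}"
  have "\<forall>f\<in>?S. continuous_on UNIV f \<and> (\<forall>x. f differentiable (at x)) \<and>
        (\<forall>i\<in>Basis. (\<lambda>x. frechet_derivative f (at x) i) \<in> ?S)"
  proof
    fix f assume "f \<in> ?S"
    then obtain G :: "'a \<Rightarrow> real \<Rightarrow> real" where f: "f = prodfun G" and G: "\<forall>i\<in>Basis. smooth1 (G i)" by blast
    have "\<forall>i\<in>Basis. \<exists>g'. smooth1 g' \<and> (\<forall>t. (G i has_real_derivative g' t) (at t))"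
      using G smooth1_deriv by blast
    then obtain G' where G': "\<And>i. i \<in> Basis \<Longrightarrow> smooth1 (G' i) \<and> (\<forall>t. (G i has_real_derivative G' i t) (at t))"
      by metis
    have diff: "\<forall>x. f differentiable (at x)"
      using prodfun_deriv[of G G'] G' f unfolding differentiable_def by blast
    moreover have "continuous_on UNIV f"
      using diff by (meson continuous_at_imp_continuous_on differentiable_imp_continuous_within)
    moreover have "\<forall>i\<in>Basis. (\<lambda>x. frechet_derivative f (at x) i) \<in> ?S"
    proof
      fix j :: 'a assume j: "j \<in> Basis"
      have "(\<lambda>x. frechet_derivative f (at x) j) = prodfun (G(j := G' j))"
        unfolding f by (rule prodfun_partial) (use G' j in auto)
      moreover have "\<forall>i\<in>Basis. smooth1 ((G(j := G' j)) i)" using G G' j by auto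
      ultimately show "(\<lambda>x. frechet_derivative f (at x) j) \<in> ?S" by blast
    qed
    ultimately show "continuous_on UNIV f \<and> (\<forall>x. f differentiable (at x)) \<and>
        (\<forall>i\<in>Basis. (\<lambda>x. frechet_derivative f (at x) i) \<in> ?S)" by blast
  qed
  then show ?thesis
    by (intro Ck_class[of ?S]) (use assms in blast)+
qed


definition plf :: "'a::euclidean_space \<Rightarrow> 'a \<Rightarrow> nat \<Rightarrow> 'a \<Rightarrow> real \<Rightarrow> real" where
  "plf a b k i t = St (real (Suc k) * (t - a \<bullet> i) - 1) * St (real (Suc k) * (b \<bullet> i - t) - 1)"

definition pl :: "'a::euclidean_space \<Rightarrow> 'a \<Rightarrow> nat \<Rightarrow> 'a \<Rightarrow> real" where
  "pl a b k = prodfun (plf a b k)"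

lemma plf_smooth1: "smooth1 (plf a b k i)"
proof -
  have "(\<lambda>t. St (real (Suc k) * t + (- real (Suc k) * (a \<bullet> i) - 1))) \<in> SC" by (rule SC.comp[OF St_SC])
  moreover have "(\<lambda>t. St ((- real (Suc k)) * t + (real (Suc k) * (b \<bullet> i) - 1))) \<in> SC" by (rule SC.comp[OF St_SC])
  ultimately have "(\<lambda>t. St (real (Suc k) * t + (- real (Suc k) * (a \<bullet> i) - 1)) *
      St ((- real (Suc k)) * t + (real (Suc k) * (b \<bullet> i) - 1))) \<in> SC" by (rule SC.mult)
  moreover have "(\<lambda>t. St (real (Suc k) * t + (- real (Suc k) * (a \<bullet> i) - 1)) *
      St ((- real (Suc k)) * t + (real (Suc k) * (b \<bullet> i) - 1))) = plf a b k i"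
    by (rule ext) (simp add: plf_def algebra_simps)
  ultimately show ?thesis using SC_smooth1 by metis
qed

lemma pl_Ck: "Ck n (pl a b k)"
  unfolding pl_def by (rule prodfun_Ck) (simp add: plf_smooth1)

lemma pl_range: "0 \<le> pl a b k x \<and> pl a b k x \<le> 1"
  unfolding pl_def prodfun_def plf_def
  using St_range by (auto intro!: prod_nonneg prod_le_1 mult_nonneg_nonneg mult_le_one)

lemma pl_nonzero:
  assumes "pl a b k x \<noteq> 0" "i \<in> Basis"
  shows "a \<bullet> i + 1 / real (Suc k) \<le> x \<bullet> i \<and> x \<bullet> i \<le> b \<bullet> i - 1 / real (Suc k)"
proof -
  have "plf a b k i (x \<bullet> i) \<noteq> 0" using assms unfolding pl_def prodfun_def by auto
  then have "real (Suc k) * (x \<bullet> i - a \<bullet> i) - 1 > 0" "real (Suc k) * (b \<bullet> i - x \<bullet> i) - 1 > 0"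
    unfolding plf_def using St_0 by (metis mult_eq_0_iff not_le)+
  then show ?thesis by (auto simp: field_simps)
qed

definition ebox :: "'a::euclidean_space \<Rightarrow> 'a \<Rightarrow> nat \<Rightarrow> 'a set" where
  "ebox a b k = cbox (\<Sum>i\<in>Basis. (a \<bullet> i + 1 / real (Suc k)) *\<^sub>R i) (\<Sum>i\<in>Basis. (b \<bullet> i - 1 / real (Suc k)) *\<^sub>R i)"

lemma pl_supp: "closure {x. pl a b k x \<noteq> 0} \<subseteq> ebox a b k"
proof (rule closure_minimal)
  show "{x. pl a b k x \<noteq> 0} \<subseteq> ebox a b k"
  proof
    fix x assume "x \<in> {x. pl a b k x \<noteq> 0}"
    then have "\<And>i. i \<in> Basis \<Longrightarrow> a \<bullet> i + 1 / real (Suc k) \<le> x \<bullet> i \<and> x \<bullet> i \<le> b \<bullet> i - 1 / real (Suc k)"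
      using pl_nonzero by blast
    then show "x \<in> ebox a b k" unfolding ebox_def mem_box by (simp del: of_nat_Suc)
  qed
qed (simp add: ebox_def closed_cbox)

lemma ebox_sub: "ebox a b k \<subseteq> box a b"
proof -
  have "1 / real (Suc k) > 0" by simp
  show ?thesis
  proof
    fix x assume "x \<in> ebox a b k"
    then have "\<And>i. i \<in> Basis \<Longrightarrow> a \<bullet> i + 1 / real (Suc k) \<le> x \<bullet> i \<and> x \<bullet> i \<le> b \<bullet> i - 1 / real (Suc k)"
      unfolding ebox_def mem_box by (simp del: of_nat_Suc)
    then show "x \<in> box a b" unfolding mem_box using \<open>1 / real (Suc k) > 0\<close>
      by (smt (verit))
  qed
qed

lemma pl_test:
  assumes "box a b \<subseteq> \<Omega>"
  shows "test_fun \<Omega> (pl a b k)"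
  unfolding test_fun_def
proof (intro conjI allI)
  show "Ck n (pl a b k)" for n by (rule pl_Ck)
  show "compact (closure {x. pl a b k x \<noteq> 0})"
    using pl_supp[of a b k] unfolding ebox_def
    by (meson bounded_cbox bounded_subset closed_closure compact_eq_bounded_closed)
  show "closure {x. pl a b k x \<noteq> 0} \<subseteq> \<Omega>"
    using pl_supp ebox_sub assms by blast
qed

lemma pl_lim: "(\<lambda>k. pl a b k x) \<longlonglongrightarrow> indicator (box a b) x"
proof (cases "x \<in> box a b")
  case True
  have ev: "\<forall>\<^sub>F k in sequentially. plf a b k i (x \<bullet> i) = 1" if i: "i \<in> Basis" for i
  proof -
    have pos: "x \<bullet> i - a \<bullet> i > 0" "b \<bullet> i - x \<bullet> i > 0" using True i by (auto simp: mem_box)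
    obtain n1 :: nat where n1: "real n1 > 2 / (x \<bullet> i - a \<bullet> i)" using reals_Archimedean2 by blast
    obtain n2 :: nat where n2: "real n2 > 2 / (b \<bullet> i - x \<bullet> i)" using reals_Archimedean2 by blast
    show ?thesis unfolding eventually_sequentially
    proof (intro exI[of _ "max n1 n2"] allI impI)
      fix k assume "max n1 n2 \<le> k"
      then have "real (Suc k) > 2 / (x \<bullet> i - a \<bullet> i)" "real (Suc k) > 2 / (b \<bullet> i - x \<bullet> i)"
        using n1 n2 by auto
      then have "real (Suc k) * (x \<bullet> i - a \<bullet> i) - 1 \<ge> 1" "real (Suc k) * (b \<bullet> i - x \<bullet> i) - 1 \<ge> 1"
        using pos by (auto simp: field_simps)
      then show "plf a b k i (x \<bullet> i) = 1" unfolding plf_def by (simp add: St_1)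
    qed
  qed
  have "\<forall>\<^sub>F k in sequentially. \<forall>i\<in>Basis. plf a b k i (x \<bullet> i) = 1"
    by (rule eventually_ball_finite) (use ev in auto)
  then have "\<forall>\<^sub>F k in sequentially. pl a b k x = 1"
    by eventually_elim (simp add: pl_def prodfun_def)
  then show ?thesis using True by (simp add: tendsto_eventually)
next
  case False
  then obtain i where i: "i \<in> Basis" "x \<bullet> i \<le> a \<bullet> i \<or> x \<bullet> i \<ge> b \<bullet> i" by (auto simp: mem_box not_less)
  have "pl a b k x = 0" for k
  proof -
    have "real (Suc k) * (x \<bullet> i - a \<bullet> i) - 1 \<le> 0 \<or> real (Suc k) * (b \<bullet> i - x \<bullet> i) - 1 \<le> 0"
      using i(2) mult_nonneg_nonpos[of "real (Suc k)" "x \<bullet> i - a \<bullet> i"]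
        mult_nonneg_nonpos[of "real (Suc k)" "b \<bullet> i - x \<bullet> i"] by auto
    then have "plf a b k i (x \<bullet> i) = 0" unfolding plf_def using St_0 by auto
    then show ?thesis unfolding pl_def prodfun_def using i(1) by (auto intro: prod_zero)
  qed
  then show ?thesis using False by simp
qed


lemma cont_meas_leb: "continuous_on UNIV f \<Longrightarrow> (f :: 'a::euclidean_space \<Rightarrow> real) \<in> borel_measurable lebesgue"
  by (rule measurable_completion) (simp add: borel_measurable_continuous_onI)

lemma box_int_zero:
  fixes \<Omega> :: "'a::euclidean_space set" and h :: "'a \<Rightarrow> real"
  assumes int: "set_integrable lebesgue \<Omega> h"
    and zero: "\<And>\<phi>. test_fun \<Omega> \<phi> \<Longrightarrow> (LINT x:\<Omega>|lebesgue. h x * \<phi> x) = 0"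
    and sub: "box a b \<subseteq> \<Omega>"
  shows "integral\<^sup>L lebesgue (\<lambda>x. indicator (box a b) x * h x) = 0"
proof -
  let ?H = "\<lambda>x. indicator \<Omega> x *\<^sub>R h x"
  have hi: "integrable lebesgue ?H" using int by (simp add: set_integrable_def)
  then have hm: "?H \<in> borel_measurable lebesgue" by auto
  have plm: "pl a b k \<in> borel_measurable lebesgue" for k
    by (rule cont_meas_leb) (metis Ck.simps(1) pl_Ck)
  have bm: "indicator (box a b) \<in> borel_measurable lebesgue"
    by (rule measurable_completion) simp
  have lim: "(\<lambda>k. integral\<^sup>L lebesgue (\<lambda>x. ?H x * pl a b k x)) \<longlonglongrightarrow> integral\<^sup>L lebesgue (\<lambda>x. ?H x * indicator (box a b) x)"
  proof (rule integral_dominated_convergence[where w="\<lambda>x. norm (?H x)"])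
    show "(\<lambda>x. ?H x * indicator (box a b) x) \<in> borel_measurable lebesgue"
      using hm bm by (rule borel_measurable_times)
    show "(\<lambda>x. ?H x * pl a b k x) \<in> borel_measurable lebesgue" for k
      using hm plm by (rule borel_measurable_times)
    show "integrable lebesgue (\<lambda>x. norm (?H x))" using hi by simp
    show "AE x in lebesgue. (\<lambda>k. ?H x * pl a b k x) \<longlonglongrightarrow> ?H x * indicator (box a b) x"
      by (intro AE_I2 tendsto_mult_left pl_lim)
    show "AE x in lebesgue. norm (?H x * pl a b k x) \<le> norm (?H x)" for k
    proof (intro AE_I2)
      fix x
      have "norm (?H x * pl a b k x) = norm (?H x) * pl a b k x"
        using pl_range[of a b k x] by (simp add: abs_mult)
      also have "\<dots> \<le> norm (?H x)" using pl_range[of a b k x] by (simp add: mult_left_le)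
      finally show "norm (?H x * pl a b k x) \<le> norm (?H x)" .
    qed
  qed
  have "integral\<^sup>L lebesgue (\<lambda>x. ?H x * pl a b k x) = 0" for k
    using zero[OF pl_test[OF sub, of k]] by (simp add: set_lebesgue_integral_def mult.assoc)
  then have "integral\<^sup>L lebesgue (\<lambda>x. ?H x * indicator (box a b) x) = 0"
  proof -
    have "(\<lambda>k. integral\<^sup>L lebesgue (\<lambda>x. ?H x * pl a b k x)) = (\<lambda>k. 0)"
      using \<open>\<And>k. integral\<^sup>L lebesgue (\<lambda>x. ?H x * pl a b k x) = 0\<close> by (rule ext)
    then have "(\<lambda>k. 0) \<longlonglongrightarrow> integral\<^sup>L lebesgue (\<lambda>x. ?H x * indicator (box a b) x)"
      using lim by simp
    then show ?thesis by (simp add: LIMSEQ_const_iff)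
  qed
  moreover have "(\<lambda>x. ?H x * indicator (box a b) x) = (\<lambda>x. indicator (box a b) x * h x)"
  proof
    fix x show "?H x * indicator (box a b) x = indicator (box a b) x * h x"
      using sub by (cases "x \<in> box a b") (auto simp: indicator_def)
  qed
  ultimately show ?thesis by simp
qed


lemma ennreal_sym_zero: "ennreal (y::real) = ennreal (- y) \<Longrightarrow> y = 0"
proof (cases "y \<ge> 0")
  case True
  assume "ennreal y = ennreal (- y)"
  then have "ennreal y = 0" using True by (simp add: ennreal_eq_0_iff)
  then show ?thesis using True by (simp add: ennreal_eq_0_iff)
next
  case False
  assume e: "ennreal y = ennreal (- y)"
  have "ennreal y = 0" using False by (simp add: ennreal_eq_0_iff)
  then have "ennreal (- y) = 0" using e by simp
  then have "- y \<le> 0" by (simp only: ennreal_eq_0_iff)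
  then show ?thesis using False by simp
qed

lemma box_ae_zero:
  fixes \<Omega> :: "'a::euclidean_space set" and h :: "'a \<Rightarrow> real"
  assumes hi: "integrable lebesgue (\<lambda>x. indicator \<Omega> x * h x)"
    and bz: "\<And>a b. box a b \<subseteq> \<Omega> \<Longrightarrow> integral\<^sup>L lebesgue (\<lambda>x. indicator (box a b) x * h x) = 0"
    and K: "box c d \<subseteq> \<Omega>"
  shows "AE x in lebesgue. x \<in> box c d \<longrightarrow> h x = 0"
proof -
  define H where "H x = indicator (box c d) x * h x" for x
  have "integrable lebesgue (\<lambda>x. indicator (box c d) x *\<^sub>R (indicator \<Omega> x * h x))"
    by (rule integrable_mult_indicator) (use hi in \<open>auto intro: measurable_completion\<close>)
  moreover have "(\<lambda>x. indicator (box c d) x *\<^sub>R (indicator \<Omega> x * h x)) = H"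
  proof
    fix x show "indicator (box c d) x *\<^sub>R (indicator \<Omega> x * h x) = H x"
      unfolding H_def using K by (cases "x \<in> box c d") (auto simp: indicator_def)
  qed
  ultimately have Hi: "integrable lebesgue H" by simp
  then have "H \<in> borel_measurable lebesgue" by auto
  from completion_ex_borel_measurable_real[OF this]
  obtain H' where H'm: "H' \<in> borel_measurable lborel" and HH': "AE x in lborel. H x = H' x" by blast
  have HH'c: "AE x in lebesgue. H x = H' x" using HH' by (simp add: AE_completion_iff)
  have "integrable lebesgue H'" by (rule integrable_cong_AE_imp[OF Hi _ HH'c]) (use H'm in \<open>auto intro: measurable_completion\<close>)
  then have H'i: "integrable lborel H'" using integrable_completion[OF H'm] by simp
  have boxz: "integral\<^sup>L lborel (\<lambda>x. indicator (box a b) x * H' x) = 0" for a b :: 'a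
  proof -
    have "integral\<^sup>L lborel (\<lambda>x. indicator (box a b) x * H' x) = integral\<^sup>L lebesgue (\<lambda>x. indicator (box a b) x * H' x)"
      by (rule integral_completion[symmetric]) (use H'm in simp)
    also have "\<dots> = integral\<^sup>L lebesgue (\<lambda>x. indicator (box a b) x * H x)"
    proof (rule integral_cong_AE)
      have bm: "indicator (box a b) \<in> borel_measurable lebesgue"
        by (rule measurable_completion) simp
      have "H' \<in> borel_measurable lebesgue" using H'm by (auto intro: measurable_completion)
      then show "(\<lambda>x. indicator (box a b) x * H' x) \<in> borel_measurable lebesgue"
        using bm by (intro borel_measurable_times) 
      show "(\<lambda>x. indicator (box a b) x * H x) \<in> borel_measurable lebesgue"
        using bm \<open>H \<in> borel_measurable lebesgue\<close> by (intro borel_measurable_times)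
      show "AE x in lebesgue. indicator (box a b) x * H' x = indicator (box a b) x * H x"
        using HH'c by eventually_elim simp
    qed
    also have "\<dots> = integral\<^sup>L lebesgue (\<lambda>x. indicator (box a b \<inter> box c d) x * h x)"
      unfolding H_def by (rule arg_cong[where f="integral\<^sup>L lebesgue"]) (auto simp: indicator_def)
    also have "\<dots> = 0"
      unfolding box_Int_box by (rule bz) (use K box_Int_box[of a b c d] in blast)
    finally show ?thesis .
  qed
  have fin: "(\<integral>\<^sup>+ x. ennreal (f x) \<partial>lborel) < \<infinity>" if "integrable lborel f" for f :: "'a \<Rightarrow> real"
  proof -
    have "(\<integral>\<^sup>+ x. ennreal (f x) \<partial>lborel) \<le> (\<integral>\<^sup>+ x. ennreal (norm (f x)) \<partial>lborel)"
      by (intro nn_integral_mono) auto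
    also have "\<dots> < \<infinity>" using that integrable_iff_bounded by blast
    finally show ?thesis .
  qed
  define M1 where "M1 = density lborel (\<lambda>x. ennreal (H' x))"
  define M2 where "M2 = density lborel (\<lambda>x. ennreal (- H' x))"
  have eqbox: "emeasure M1 (box a b) = emeasure M2 (box a b)" for a b :: 'a
  proof -
    let ?F = "\<lambda>x. indicator (box a b) x * H' x"
    have Fi: "integrable lborel ?F"
      using integrable_mult_indicator[OF _ H'i, of "box a b"] by simp
    have "0 = enn2real (\<integral>\<^sup>+ x. ennreal (?F x) \<partial>lborel) - enn2real (\<integral>\<^sup>+ x. ennreal (- ?F x) \<partial>lborel)"
      using boxz[of a b] real_lebesgue_integral_def[OF Fi] by simp
    moreover have f1: "(\<integral>\<^sup>+ x. ennreal (?F x) \<partial>lborel) < \<infinity>" by (rule fin[OF Fi])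
    moreover have f2: "(\<integral>\<^sup>+ x. ennreal (- ?F x) \<partial>lborel) < \<infinity>" by (rule fin) (use Fi in simp)
    ultimately have "(\<integral>\<^sup>+ x. ennreal (?F x) \<partial>lborel) = (\<integral>\<^sup>+ x. ennreal (- ?F x) \<partial>lborel)"
    proof -
      assume e: "0 = enn2real (\<integral>\<^sup>+ x. ennreal (?F x) \<partial>lborel) - enn2real (\<integral>\<^sup>+ x. ennreal (- ?F x) \<partial>lborel)"
      have "(\<integral>\<^sup>+ x. ennreal (?F x) \<partial>lborel) = ennreal (enn2real (\<integral>\<^sup>+ x. ennreal (?F x) \<partial>lborel))"
        using f1 by simp
      also have "\<dots> = ennreal (enn2real (\<integral>\<^sup>+ x. ennreal (- ?F x) \<partial>lborel))" using e by simp
      also have "\<dots> = (\<integral>\<^sup>+ x. ennreal (- ?F x) \<partial>lborel)" using f2 by simp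
      finally show ?thesis .
    qed
    moreover have "emeasure M1 (box a b) = (\<integral>\<^sup>+ x. ennreal (?F x) \<partial>lborel)"
      unfolding M1_def using H'm
      by (subst emeasure_density) (auto intro!: nn_integral_cong simp: indicator_def)
    moreover have "emeasure M2 (box a b) = (\<integral>\<^sup>+ x. ennreal (- ?F x) \<partial>lborel)"
      unfolding M2_def using H'm
      by (subst emeasure_density) (auto intro!: nn_integral_cong simp: indicator_def)
    ultimately show ?thesis by simp
  qed
  let ?E = "range (\<lambda>(a, b). box a b :: 'a set)"
  let ?A = "\<lambda>i::nat. box (- (real i *\<^sub>R One)) (real i *\<^sub>R One) :: 'a set"
  have "M1 = M2"
  proof (rule measure_eqI_generator_eq[where E="?E" and \<Omega>=UNIV and A="?A"])
    show "Int_stable ?E"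
      unfolding Int_stable_def by (auto simp: box_Int_box)
    show "?E \<subseteq> Pow UNIV" by simp
    show "emeasure M1 X = emeasure M2 X" if "X \<in> ?E" for X using that eqbox by auto
    have "sets borel = sigma_sets UNIV ?E"
      by (subst borel_eq_box) (simp add: sets_measure_of)
    then show "sets M1 = sigma_sets UNIV ?E" "sets M2 = sigma_sets UNIV ?E"
      unfolding M1_def M2_def by simp_all
    show "range ?A \<subseteq> ?E" by auto
    show "(\<Union>i. ?A i) = UNIV" by (rule UN_box_eq_UNIV)
    show "emeasure M1 (?A i) \<noteq> \<infinity>" for i
    proof -
      have "emeasure M1 (?A i) \<le> emeasure M1 UNIV"
        by (rule emeasure_mono) (auto simp: M1_def)
      also have "\<dots> = (\<integral>\<^sup>+ x. ennreal (H' x) \<partial>lborel)"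
        unfolding M1_def using H'm by (subst emeasure_density) auto
      also have "\<dots> < \<infinity>" by (rule fin[OF H'i])
      finally show ?thesis by simp
    qed
  qed
  then have "AE x in lborel. ennreal (H' x) = ennreal (- H' x)"
    unfolding M1_def M2_def
    using finite_density_unique[of "\<lambda>x. ennreal (H' x)" lborel "\<lambda>x. ennreal (- H' x)"] H'm fin[OF H'i]
    by auto
  then have "AE x in lborel. H x = 0"
    using HH' by eventually_elim (metis ennreal_sym_zero)
  then have "AE x in lebesgue. H x = 0" by (simp add: AE_completion_iff)
  then show ?thesis by eventually_elim (auto simp: H_def)
qed


lemma FL:
  fixes \<Omega> :: "'a::euclidean_space set" and h :: "'a \<Rightarrow> real"
  assumes op: "open \<Omega>" and int: "set_integrable lebesgue \<Omega> h"
    and zero: "\<And>\<phi>. test_fun \<Omega> \<phi> \<Longrightarrow> (LINT x:\<Omega>|lebesgue. h x * \<phi> x) = 0"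
  shows "AE x in lebesgue. x \<in> \<Omega> \<longrightarrow> h x = 0"
proof -
  have hi: "integrable lebesgue (\<lambda>x. indicator \<Omega> x * h x)" using int by (simp add: set_integrable_def)
  have bz: "\<And>a b. box a b \<subseteq> \<Omega> \<Longrightarrow> integral\<^sup>L lebesgue (\<lambda>x. indicator (box a b) x * h x) = 0"
    using box_int_zero[OF int zero] by blast
  define a' where "a' = (\<lambda>f :: 'a \<Rightarrow> real \<times> real. (\<Sum>(i::'a)\<in>Basis. fst (f i) *\<^sub>R i))"
  define b' where "b' = (\<lambda>f :: 'a \<Rightarrow> real \<times> real. (\<Sum>(i::'a)\<in>Basis. snd (f i) *\<^sub>R i))"
  define I where "I = {f\<in>Basis \<rightarrow>\<^sub>E \<rat> \<times> \<rat>. box (a' f) (b' f) \<subseteq> \<Omega>}"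
  have U: "\<Omega> = (\<Union>f\<in>I. box (a' f) (b' f))"
    unfolding a'_def b'_def I_def by (rule open_UNION_box[OF op])
  have "countable (Basis \<rightarrow>\<^sub>E (\<rat> \<times> \<rat>) :: ('a \<Rightarrow> real \<times> real) set)"
    by (intro countable_PiE finite_Basis countable_SIGMA countable_rat)
  then have cI: "countable I" unfolding I_def by (rule countable_subset[rotated]) auto
  have "AE x in lebesgue. \<forall>f\<in>I. x \<in> box (a' f) (b' f) \<longrightarrow> h x = 0"
  proof (rule AE_ball_countable'[OF _ cI])
    fix f assume "f \<in> I"
    then have "box (a' f) (b' f) \<subseteq> \<Omega>" unfolding I_def by blast
    then show "AE x in lebesgue. x \<in> box (a' f) (b' f) \<longrightarrow> h x = 0"
      using box_ae_zero[of \<Omega> h, OF hi bz] by blast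
  qed
  then show ?thesis
  proof eventually_elim
    case (elim x)
    show ?case
    proof
      assume "x \<in> \<Omega>"
      then obtain f where "f \<in> I" "x \<in> box (a' f) (b' f)" using U by blast
      then show "h x = 0" using elim by blast
    qed
  qed
qed


lemma sbm_mult:
  assumes "set_borel_measurable M A u" "set_borel_measurable M A v"
  shows "set_borel_measurable M A (\<lambda>x. u x * v x :: real)"
proof -
  have "(\<lambda>x. (indicator A x *\<^sub>R u x) * (indicator A x *\<^sub>R v x)) \<in> borel_measurable M"
    using assms unfolding set_borel_measurable_def by (intro borel_measurable_times)
  moreover have "(\<lambda>x. (indicator A x *\<^sub>R u x) * (indicator A x *\<^sub>R v x)) = (\<lambda>x. indicator A x *\<^sub>R (u x * v x))"
    by (auto simp: indicator_def)
  ultimately show ?thesis unfolding set_borel_measurable_def by simp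
qed

lemma sbm_add:
  assumes "set_borel_measurable M A u" "set_borel_measurable M A v"
  shows "set_borel_measurable M A (\<lambda>x. u x + v x :: real)"
proof -
  have "(\<lambda>x. (indicator A x *\<^sub>R u x) + (indicator A x *\<^sub>R v x)) \<in> borel_measurable M"
    using assms unfolding set_borel_measurable_def by (intro borel_measurable_add)
  moreover have "(\<lambda>x. (indicator A x *\<^sub>R u x) + (indicator A x *\<^sub>R v x)) = (\<lambda>x. indicator A x *\<^sub>R (u x + v x))"
    by (auto simp: indicator_def)
  ultimately show ?thesis unfolding set_borel_measurable_def by simp
qed

lemma sbm_scale:
  assumes "set_borel_measurable M A u"
  shows "set_borel_measurable M A (\<lambda>x. c * u x :: real)"
proof -
  have "(\<lambda>x. c * (indicator A x *\<^sub>R u x)) \<in> borel_measurable M"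
    using assms unfolding set_borel_measurable_def by (intro borel_measurable_times) auto
  moreover have "(\<lambda>x. c * (indicator A x *\<^sub>R u x)) = (\<lambda>x. indicator A x *\<^sub>R (c * u x))"
    by (auto simp: indicator_def)
  ultimately show ?thesis unfolding set_borel_measurable_def by simp
qed

lemma sbm_cont:
  fixes \<psi> :: "'a::euclidean_space \<Rightarrow> real"
  assumes "continuous_on UNIV \<psi>" "A \<in> sets lebesgue"
  shows "set_borel_measurable lebesgue A \<psi>"
  unfolding set_borel_measurable_def
  using assms cont_meas_leb[OF assms(1)] by (intro borel_measurable_scaleR) auto

lemma abs_le_sq: "\<bar>t::real\<bar> \<le> 1 + t\<^sup>2"
proof -
  have "0 \<le> (\<bar>t\<bar> - 1)\<^sup>2" by simp
  also have "(\<bar>t\<bar> - 1)\<^sup>2 = t\<^sup>2 - 2 * \<bar>t\<bar> + 1" by (simp add: power2_eq_square algebra_simps)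
  finally show ?thesis by simp
qed

lemma sint_sbm: "set_integrable M A (f :: _ \<Rightarrow> real) \<Longrightarrow> set_borel_measurable M A f"
  unfolding set_integrable_def set_borel_measurable_def by auto

context
  fixes \<Omega> :: "'a::euclidean_space set"
  assumes op: "open \<Omega>" and bd: "bounded \<Omega>"
begin

lemma Om_lmeas: "\<Omega> \<in> lmeasurable" using lmeasurable_open[OF bd op] .

lemma Om_sets: "\<Omega> \<in> sets lebesgue" using Om_lmeas by (simp add: fmeasurable_def)

lemma Om_fin: "emeasure lebesgue \<Omega> < \<infinity>" using Om_lmeas unfolding fmeasurable_def by blast

lemma sint_const: "set_integrable lebesgue \<Omega> (\<lambda>x. c :: real)"
  unfolding set_integrable_def using Om_sets Om_fin by (intro integrable_indicator)

lemma L2_int: "L2_on \<Omega> u \<Longrightarrow> set_integrable lebesgue \<Omega> u"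
  unfolding L2_on_def
proof (elim conjE)
  assume m: "set_borel_measurable lebesgue \<Omega> u" and i: "set_integrable lebesgue \<Omega> (\<lambda>x. (u x)\<^sup>2)"
  have "set_integrable lebesgue \<Omega> (\<lambda>x. 1 + (u x)\<^sup>2)"
    using sint_const i by (rule set_integral_add)
  then show "set_integrable lebesgue \<Omega> u"
  proof (rule set_integrable_bound[OF _ m], intro AE_I2 impI)
    fix x
    have "\<bar>u x\<bar> \<le> 1 + (u x)\<^sup>2" by (rule abs_le_sq)
    then show "norm (u x) \<le> norm (1 + (u x)\<^sup>2)" by simp
  qed
qed

lemma L2_prod: "L2_on \<Omega> u \<Longrightarrow> L2_on \<Omega> v \<Longrightarrow> set_integrable lebesgue \<Omega> (\<lambda>x. u x * v x)"
  unfolding L2_on_def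
proof (elim conjE)
  assume m: "set_borel_measurable lebesgue \<Omega> u" "set_borel_measurable lebesgue \<Omega> v"
    and i: "set_integrable lebesgue \<Omega> (\<lambda>x. (u x)\<^sup>2)" "set_integrable lebesgue \<Omega> (\<lambda>x. (v x)\<^sup>2)"
  have "set_integrable lebesgue \<Omega> (\<lambda>x. (u x)\<^sup>2 + (v x)\<^sup>2)"
    using i by (rule set_integral_add)
  then show "set_integrable lebesgue \<Omega> (\<lambda>x. u x * v x)"
  proof (rule set_integrable_bound[OF _ sbm_mult[OF m]], intro AE_I2 impI)
    fix x
    have "2 * \<bar>u x * v x\<bar> \<le> (u x)\<^sup>2 + (v x)\<^sup>2"
      using sum_squares_bound[of "\<bar>u x\<bar>" "\<bar>v x\<bar>"] by (simp add: abs_mult power2_eq_square)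
    then show "norm (u x * v x) \<le> norm ((u x)\<^sup>2 + (v x)\<^sup>2)" by simp
  qed
qed

lemma L2_add: "L2_on \<Omega> u \<Longrightarrow> L2_on \<Omega> v \<Longrightarrow> L2_on \<Omega> (\<lambda>x. u x + v x)"
proof -
  assume u: "L2_on \<Omega> u" and v: "L2_on \<Omega> v"
  have m: "set_borel_measurable lebesgue \<Omega> (\<lambda>x. u x + v x)"
    using u v unfolding L2_on_def by (intro sbm_add) auto
  have "set_integrable lebesgue \<Omega> (\<lambda>x. (u x)\<^sup>2 + (v x)\<^sup>2 + 2 * (u x * v x))"
    using u v L2_prod[OF u v] unfolding L2_on_def
    by (intro set_integral_add set_integrable_mult_right) auto
  moreover have "(\<lambda>x. (u x)\<^sup>2 + (v x)\<^sup>2 + 2 * (u x * v x)) = (\<lambda>x. (u x + v x)\<^sup>2)"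
    by (auto simp: power2_eq_square algebra_simps)
  ultimately show ?thesis using m unfolding L2_on_def by simp
qed

lemma L2_scale: "L2_on \<Omega> u \<Longrightarrow> L2_on \<Omega> (\<lambda>x. c * u x)"
proof -
  assume u: "L2_on \<Omega> u"
  have "set_integrable lebesgue \<Omega> (\<lambda>x. c\<^sup>2 * (u x)\<^sup>2)"
    using u unfolding L2_on_def by (intro set_integrable_mult_right) auto
  then show ?thesis using u sbm_scale unfolding L2_on_def by (auto simp: power_mult_distrib)
qed

lemma L2_zero: "L2_on \<Omega> (\<lambda>x. 0)"
  unfolding L2_on_def set_borel_measurable_def by simp

lemma cont_bounded_Om:
  fixes \<psi> :: "'a \<Rightarrow> real"
  assumes "continuous_on UNIV \<psi>"
  shows "\<exists>C. \<forall>x\<in>\<Omega>. \<bar>\<psi> x\<bar> \<le> C"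
proof -
  have "compact (closure \<Omega>)" using bd by (simp add: compact_closure)
  then have "bounded (\<psi> ` closure \<Omega>)"
    by (intro compact_imp_bounded compact_continuous_image continuous_on_subset[OF assms]) auto
  then obtain C where "\<forall>y\<in>\<psi> ` closure \<Omega>. norm y \<le> C" by (auto simp: bounded_iff)
  then show ?thesis using closure_subset by (intro exI[of _ C]) fastforce
qed

lemma sint_cont_mult:
  fixes \<psi> :: "'a \<Rightarrow> real"
  assumes u: "set_integrable lebesgue \<Omega> u" and c: "continuous_on UNIV \<psi>"
  shows "set_integrable lebesgue \<Omega> (\<lambda>x. u x * \<psi> x)"
proof -
  obtain C where C: "\<forall>x\<in>\<Omega>. \<bar>\<psi> x\<bar> \<le> C" using cont_bounded_Om[OF c] by blast
  have "set_integrable lebesgue \<Omega> (\<lambda>x. C * u x)" using u by (rule set_integrable_mult_right)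
  then show ?thesis
  proof (rule set_integrable_bound)
    show "set_borel_measurable lebesgue \<Omega> (\<lambda>x. u x * \<psi> x)"
      by (rule sbm_mult[OF sint_sbm[OF u] sbm_cont[OF c Om_sets]])
    show "AE x in lebesgue. x \<in> \<Omega> \<longrightarrow> norm (u x * \<psi> x) \<le> norm (C * u x)"
    proof (intro AE_I2 impI)
      fix x assume "x \<in> \<Omega>"
      then have "\<bar>\<psi> x\<bar> \<le> C" using C by blast
      then have "\<bar>u x\<bar> * \<bar>\<psi> x\<bar> \<le> \<bar>u x\<bar> * C" by (rule mult_left_mono) simp
      moreover have "C \<ge> 0" using \<open>\<bar>\<psi> x\<bar> \<le> C\<close> by linarith
      ultimately show "norm (u x * \<psi> x) \<le> norm (C * u x)" by (simp add: abs_mult mult.commute)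
    qed
  qed
qed

end


definition WGs :: "'a::euclidean_space set \<Rightarrow> ('a \<Rightarrow> real) set" where
  "WGs \<Omega> = {u. L2_on \<Omega> u \<and> (\<exists>g. weak_grad \<Omega> u g)}"

lemma test_cont: "test_fun \<Omega> \<phi> \<Longrightarrow> continuous_on UNIV \<phi>"
  unfolding test_fun_def by (metis Ck.simps(1))

lemma grad_inner: "i \<in> Basis \<Longrightarrow> grad \<phi> x \<bullet> i = frechet_derivative \<phi> (at x) i"
  unfolding grad_def by simp

lemma test_grad_cont: "test_fun \<Omega> \<phi> \<Longrightarrow> i \<in> Basis \<Longrightarrow> continuous_on UNIV (\<lambda>x. grad \<phi> x \<bullet> i)"
  unfolding test_fun_def grad_inner by (metis Ck.simps One_nat_def)

lemma wgrad_wg: "(\<exists>g. weak_grad \<Omega> u g) \<Longrightarrow> weak_grad \<Omega> u (wgrad \<Omega> u)"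
  unfolding wgrad_def using someI_ex[of "weak_grad \<Omega> u"] by blast

lemma set_int_AE_zero:
  assumes "set_borel_measurable M A (f :: _ \<Rightarrow> real)" "AE x in M. x \<in> A \<longrightarrow> f x = 0"
  shows "(LINT x:A|M. f x) = 0"
proof -
  have "integral\<^sup>L M (\<lambda>x. indicator A x *\<^sub>R f x) = integral\<^sup>L M (\<lambda>x. 0)"
    by (rule integral_cong_AE) (use assms in \<open>auto simp: set_borel_measurable_def indicator_def \<close>)
  then show ?thesis by (simp add: set_lebesgue_integral_def)
qed

context
  fixes \<Omega> :: "'a::euclidean_space set"
  assumes op: "open \<Omega>" and bd: "bounded \<Omega>"
begin

lemma wg_add:
  assumes u: "L2_on \<Omega> u" and v: "L2_on \<Omega> v" and g: "weak_grad \<Omega> u g" and g': "weak_grad \<Omega> v g'"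
  shows "weak_grad \<Omega> (\<lambda>x. u x + v x) (\<lambda>x. g x + g' x)"
  unfolding weak_grad_def
proof (intro conjI ballI allI impI)
  fix i :: 'a assume i: "i \<in> Basis"
  show "L2_on \<Omega> (\<lambda>x. (g x + g' x) \<bullet> i)"
    using g g' i unfolding weak_grad_def inner_add_left by (intro L2_add[OF op bd]) auto
next
  fix \<phi> and i :: 'a assume t: "test_fun \<Omega> \<phi>" and i: "i \<in> Basis"
  have gi: "L2_on \<Omega> (\<lambda>x. g x \<bullet> i)" "L2_on \<Omega> (\<lambda>x. g' x \<bullet> i)" using g g' i unfolding weak_grad_def by auto
  have "(LINT x:\<Omega>|lebesgue. (u x + v x) * (grad \<phi> x \<bullet> i)) =
        (LINT x:\<Omega>|lebesgue. u x * (grad \<phi> x \<bullet> i) + v x * (grad \<phi> x \<bullet> i))"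
    by (simp add: distrib_right)
  also have "\<dots> = (LINT x:\<Omega>|lebesgue. u x * (grad \<phi> x \<bullet> i)) + (LINT x:\<Omega>|lebesgue. v x * (grad \<phi> x \<bullet> i))"
    by (intro set_integral_add sint_cont_mult[OF op bd] L2_int[OF op bd] u v test_grad_cont[OF t i])
  also have "\<dots> = - (LINT x:\<Omega>|lebesgue. (g x \<bullet> i) * \<phi> x) - (LINT x:\<Omega>|lebesgue. (g' x \<bullet> i) * \<phi> x)"
    using g g' t i unfolding weak_grad_def by auto
  also have "\<dots> = - (LINT x:\<Omega>|lebesgue. (g x \<bullet> i) * \<phi> x + (g' x \<bullet> i) * \<phi> x)"
  proof -
    have i1: "set_integrable lebesgue \<Omega> (\<lambda>x. (g x \<bullet> i) * \<phi> x)"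
      by (rule sint_cont_mult[OF op bd L2_int[OF op bd gi(1)] test_cont[OF t]])
    have i2: "set_integrable lebesgue \<Omega> (\<lambda>x. (g' x \<bullet> i) * \<phi> x)"
      by (rule sint_cont_mult[OF op bd L2_int[OF op bd gi(2)] test_cont[OF t]])
    show ?thesis using set_integral_add(2)[OF i1 i2] by simp
  qed
  also have "\<dots> = - (LINT x:\<Omega>|lebesgue. ((g x + g' x) \<bullet> i) * \<phi> x)"
    by (simp add: inner_add_left distrib_right)
  finally show "(LINT x:\<Omega>|lebesgue. (u x + v x) * (grad \<phi> x \<bullet> i)) = - (LINT x:\<Omega>|lebesgue. ((g x + g' x) \<bullet> i) * \<phi> x)" .
qed

lemma wg_scale:
  assumes g: "weak_grad \<Omega> u g"
  shows "weak_grad \<Omega> (\<lambda>x. c * u x) (\<lambda>x. c *\<^sub>R g x)"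
  unfolding weak_grad_def
proof (intro conjI ballI allI impI)
  fix i :: 'a assume i: "i \<in> Basis"
  show "L2_on \<Omega> (\<lambda>x. (c *\<^sub>R g x) \<bullet> i)"
    using g i unfolding weak_grad_def by (auto intro: L2_scale[OF op bd])
next
  fix \<phi> and i :: 'a assume t: "test_fun \<Omega> \<phi>" and i: "i \<in> Basis"
  have "(LINT x:\<Omega>|lebesgue. c * u x * (grad \<phi> x \<bullet> i)) = c * (LINT x:\<Omega>|lebesgue. u x * (grad \<phi> x \<bullet> i))"
    by (simp add: mult.assoc)
  also have "\<dots> = c * - (LINT x:\<Omega>|lebesgue. (g x \<bullet> i) * \<phi> x)" using g t i unfolding weak_grad_def by auto
  also have "\<dots> = - (LINT x:\<Omega>|lebesgue. ((c *\<^sub>R g x) \<bullet> i) * \<phi> x)" by (simp add: mult.assoc)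
  finally show "(LINT x:\<Omega>|lebesgue. c * u x * (grad \<phi> x \<bullet> i)) = - (LINT x:\<Omega>|lebesgue. ((c *\<^sub>R g x) \<bullet> i) * \<phi> x)" .
qed

lemma wg_unique:
  assumes g1: "weak_grad \<Omega> u g1" and g2: "weak_grad \<Omega> u g2"
  shows "AE x in lebesgue. x \<in> \<Omega> \<longrightarrow> g1 x = g2 x"
proof -
  have "AE x in lebesgue. \<forall>i\<in>Basis. x \<in> \<Omega> \<longrightarrow> g1 x \<bullet> i - g2 x \<bullet> i = 0"
  proof (rule AE_ball_countable'[OF _ countable_finite[OF finite_Basis]])
    fix i :: 'a assume i: "i \<in> Basis"
    have gi: "L2_on \<Omega> (\<lambda>x. g1 x \<bullet> i)" "L2_on \<Omega> (\<lambda>x. g2 x \<bullet> i)" using g1 g2 i unfolding weak_grad_def by auto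
    show "AE x in lebesgue. x \<in> \<Omega> \<longrightarrow> g1 x \<bullet> i - g2 x \<bullet> i = 0"
    proof (rule FL[OF op])
      show "set_integrable lebesgue \<Omega> (\<lambda>x. g1 x \<bullet> i - g2 x \<bullet> i)"
        by (intro set_integral_diff L2_int[OF op bd] gi)
      fix \<phi> assume t: "test_fun \<Omega> \<phi>"
      have "(LINT x:\<Omega>|lebesgue. (g1 x \<bullet> i - g2 x \<bullet> i) * \<phi> x) =
          (LINT x:\<Omega>|lebesgue. (g1 x \<bullet> i) * \<phi> x - (g2 x \<bullet> i) * \<phi> x)"
        by (simp add: left_diff_distrib)
      also have "\<dots> = (LINT x:\<Omega>|lebesgue. (g1 x \<bullet> i) * \<phi> x) - (LINT x:\<Omega>|lebesgue. (g2 x \<bullet> i) * \<phi> x)"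
        by (intro set_integral_diff sint_cont_mult[OF op bd] L2_int[OF op bd] gi test_cont[OF t])
      also have "\<dots> = 0"
        using g1 g2 t i unfolding weak_grad_def by (metis diff_self minus_equation_iff)
      finally show "(LINT x:\<Omega>|lebesgue. (g1 x \<bullet> i - g2 x \<bullet> i) * \<phi> x) = 0" .
    qed
  qed
  then show ?thesis
    by eventually_elim (auto intro: euclidean_eqI)
qed

lemma wg_null:
  assumes u: "L2_on \<Omega> u" and z: "AE x in lebesgue. x \<in> \<Omega> \<longrightarrow> u x = 0"
  shows "weak_grad \<Omega> u (\<lambda>x. 0)"
  unfolding weak_grad_def
proof (intro conjI ballI allI impI)
  fix i :: 'a assume "i \<in> Basis"
  show "L2_on \<Omega> (\<lambda>x. 0 \<bullet> i)" using L2_zero[OF op bd] by simp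
next
  fix \<phi> and i :: 'a assume t: "test_fun \<Omega> \<phi>" and i: "i \<in> Basis"
  have "set_integrable lebesgue \<Omega> (\<lambda>x. u x * (grad \<phi> x \<bullet> i))"
    by (intro sint_cont_mult[OF op bd] L2_int[OF op bd] u test_grad_cont[OF t i])
  then have "(LINT x:\<Omega>|lebesgue. u x * (grad \<phi> x \<bullet> i)) = 0"
    by (rule set_int_AE_zero[OF sint_sbm]) (use z in \<open>eventually_elim, auto\<close>)
  then show "(LINT x:\<Omega>|lebesgue. u x * (grad \<phi> x \<bullet> i)) = - (LINT x:\<Omega>|lebesgue. (0 \<bullet> i) * \<phi> x)" by simp
qed

end


lemma set_int_cong_AE':
  assumes "set_borel_measurable M A (f :: _ \<Rightarrow> real)" "set_borel_measurable M A g"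
    "AE x in M. x \<in> A \<longrightarrow> f x = g x"
  shows "(LINT x:A|M. f x) = (LINT x:A|M. g x)"
proof -
  have "integral\<^sup>L M (\<lambda>x. indicator A x *\<^sub>R f x) = integral\<^sup>L M (\<lambda>x. indicator A x *\<^sub>R g x)"
    by (rule integral_cong_AE) (use assms in \<open>auto simp: set_borel_measurable_def indicator_def\<close>)
  then show ?thesis by (simp add: set_lebesgue_integral_def)
qed

lemma set_int_nonneg_AE:
  assumes "AE x in M. x \<in> A \<longrightarrow> 0 \<le> (f x :: real)"
  shows "0 \<le> (LINT x:A|M. f x)"
  unfolding set_lebesgue_integral_def
  by (rule integral_nonneg_AE) (use assms in \<open>eventually_elim, auto simp: indicator_def\<close>)

lemma l2ip_sym: "l2ip \<Omega> f g = l2ip \<Omega> g f"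
  unfolding l2ip_def by (simp add: mult.commute)

lemma l2ip_pos: "l2ip \<Omega> f f \<ge> 0"
  unfolding l2ip_def by (rule set_int_nonneg_AE) simp

lemma aform_sym: "aform \<Omega> \<kappa> f g = aform \<Omega> \<kappa> g f"
  unfolding aform_def by (simp add: inner_commute)

context
  fixes \<Omega> :: "'a::euclidean_space set"
  assumes op: "open \<Omega>" and bd: "bounded \<Omega>"
begin

lemma WGs_L2: "u \<in> WGs \<Omega> \<Longrightarrow> L2_on \<Omega> u" unfolding WGs_def by blast

lemma WGs_add: "u \<in> WGs \<Omega> \<Longrightarrow> v \<in> WGs \<Omega> \<Longrightarrow> (\<lambda>x. u x + v x) \<in> WGs \<Omega>"
  unfolding WGs_def using L2_add[OF op bd] wg_add[OF op bd] by blast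

lemma WGs_scale: "u \<in> WGs \<Omega> \<Longrightarrow> (\<lambda>x. c * u x) \<in> WGs \<Omega>"
  unfolding WGs_def using L2_scale[OF op bd] wg_scale[OF op bd] by blast

lemma WGs_zero: "(\<lambda>x. 0) \<in> WGs \<Omega>"
  unfolding WGs_def using L2_zero[OF op bd] wg_null[OF op bd L2_zero[OF op bd]] by auto

lemma H10_WGs: "H10 \<Omega> \<subseteq> WGs \<Omega>"
  unfolding H10_def WGs_def by blast

lemma l2ip_add: "L2_on \<Omega> f \<Longrightarrow> L2_on \<Omega> g \<Longrightarrow> L2_on \<Omega> h \<Longrightarrow>
    l2ip \<Omega> (\<lambda>x. f x + g x) h = l2ip \<Omega> f h + l2ip \<Omega> g h"
  unfolding l2ip_def using L2_prod[OF op bd]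
  by (simp add: distrib_right set_integral_add(2))

lemma l2ip_scale: "L2_on \<Omega> f \<Longrightarrow> L2_on \<Omega> h \<Longrightarrow>
    l2ip \<Omega> (\<lambda>x. c * f x) h = c * l2ip \<Omega> f h"
  unfolding l2ip_def by (simp add: mult.assoc)

lemma l2ip_null:
  assumes f: "L2_on \<Omega> f" and z: "l2ip \<Omega> f f = 0"
  shows "AE x in lebesgue. x \<in> \<Omega> \<longrightarrow> f x = 0"
proof -
  have i: "integrable lebesgue (\<lambda>x. indicator \<Omega> x *\<^sub>R (f x * f x))"
    using L2_prod[OF op bd f f] by (simp add: set_integrable_def)
  have "integral\<^sup>L lebesgue (\<lambda>x. indicator \<Omega> x *\<^sub>R (f x * f x)) = 0"
    using z by (simp add: l2ip_def set_lebesgue_integral_def)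
  then have "AE x in lebesgue. indicator \<Omega> x *\<^sub>R (f x * f x) = 0"
    using integral_nonneg_eq_0_iff_AE[OF i] by (simp add: indicator_def)
  then show ?thesis by eventually_elim (auto simp: indicator_def)
qed

context
  fixes \<kappa> :: "'a \<Rightarrow> real" and \<kappa>0 :: real
  assumes kL: "Linf_on \<Omega> \<kappa>" and kpos: "AE x in lebesgue. x \<in> \<Omega> \<longrightarrow> \<kappa> x \<ge> \<kappa>0" and k0: "\<kappa>0 > 0"
begin

lemma a_int:
  assumes g: "weak_grad \<Omega> u g" and g': "weak_grad \<Omega> v g'"
  shows "set_integrable lebesgue \<Omega> (\<lambda>x. \<kappa> x * (g x \<bullet> g' x))"
proof -
  obtain C where C: "AE x in lebesgue. x \<in> \<Omega> \<longrightarrow> \<bar>\<kappa> x\<bar> \<le> C" using kL unfolding Linf_on_def by blast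
  have km: "set_borel_measurable lebesgue \<Omega> \<kappa>" using kL unfolding Linf_on_def by blast
  have "set_integrable lebesgue \<Omega> (\<lambda>x. \<Sum>b\<in>Basis. (g x \<bullet> b) * (g' x \<bullet> b))"
  proof -
    have "integrable lebesgue (\<lambda>x. \<Sum>b\<in>Basis. indicator \<Omega> x *\<^sub>R ((g x \<bullet> b) * (g' x \<bullet> b)))"
    proof (rule Bochner_Integration.integrable_sum)
      fix b :: 'a assume b: "b \<in> Basis"
      then have "L2_on \<Omega> (\<lambda>x. g x \<bullet> b)" "L2_on \<Omega> (\<lambda>x. g' x \<bullet> b)"
        using g g' unfolding weak_grad_def by auto
      then show "integrable lebesgue (\<lambda>x. indicator \<Omega> x *\<^sub>R ((g x \<bullet> b) * (g' x \<bullet> b)))"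
        using L2_prod[OF op bd] unfolding set_integrable_def by blast
    qed
    moreover have "(\<lambda>x. \<Sum>b\<in>Basis. indicator \<Omega> x *\<^sub>R ((g x \<bullet> b) * (g' x \<bullet> b))) =
        (\<lambda>x. indicator \<Omega> x *\<^sub>R (\<Sum>b\<in>Basis. (g x \<bullet> b) * (g' x \<bullet> b)))"
      by (rule ext) (simp only: scaleR_sum_right)
    ultimately show ?thesis unfolding set_integrable_def by simp
  qed
  then have hi: "set_integrable lebesgue \<Omega> (\<lambda>x. g x \<bullet> g' x)"
    by (simp add: euclidean_inner[of "g _" "g' _"])
  have "set_integrable lebesgue \<Omega> (\<lambda>x. C * (g x \<bullet> g' x))" using hi by (rule set_integrable_mult_right)
  then show ?thesis
  proof (rule set_integrable_bound)
    show "set_borel_measurable lebesgue \<Omega> (\<lambda>x. \<kappa> x * (g x \<bullet> g' x))"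
      by (rule sbm_mult[OF km sint_sbm[OF hi]])
    show "AE x in lebesgue. x \<in> \<Omega> \<longrightarrow> norm (\<kappa> x * (g x \<bullet> g' x)) \<le> norm (C * (g x \<bullet> g' x))"
      using C
    proof eventually_elim
      case (elim x)
      show ?case
      proof
        assume "x \<in> \<Omega>"
        then have "\<bar>\<kappa> x\<bar> \<le> C" using elim by blast
        then have "\<bar>\<kappa> x\<bar> * \<bar>g x \<bullet> g' x\<bar> \<le> C * \<bar>g x \<bullet> g' x\<bar>" by (rule mult_right_mono) simp
        moreover have "C \<ge> 0" using \<open>\<bar>\<kappa> x\<bar> \<le> C\<close> by linarith
        ultimately show "norm (\<kappa> x * (g x \<bullet> g' x)) \<le> norm (C * (g x \<bullet> g' x))" by (simp add: abs_mult)
      qed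
    qed
  qed
qed

lemma WGs_wg: "u \<in> WGs \<Omega> \<Longrightarrow> weak_grad \<Omega> u (wgrad \<Omega> u)"
  unfolding WGs_def by (intro wgrad_wg) blast

lemma aform_add:
  assumes u: "u \<in> WGs \<Omega>" and v: "v \<in> WGs \<Omega>" and w: "w \<in> WGs \<Omega>"
  shows "aform \<Omega> \<kappa> (\<lambda>x. u x + v x) w = aform \<Omega> \<kappa> u w + aform \<Omega> \<kappa> v w"
proof -
  have gu: "weak_grad \<Omega> u (wgrad \<Omega> u)" and gv: "weak_grad \<Omega> v (wgrad \<Omega> v)"
    and gw: "weak_grad \<Omega> w (wgrad \<Omega> w)" using u v w WGs_wg by auto
  have guv: "weak_grad \<Omega> (\<lambda>x. u x + v x) (wgrad \<Omega> (\<lambda>x. u x + v x))"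
    using WGs_wg WGs_add[OF u v] by blast
  have gs: "weak_grad \<Omega> (\<lambda>x. u x + v x) (\<lambda>x. wgrad \<Omega> u x + wgrad \<Omega> v x)"
    using wg_add[OF op bd WGs_L2[OF u] WGs_L2[OF v] gu gv] .
  have ae: "AE x in lebesgue. x \<in> \<Omega> \<longrightarrow> wgrad \<Omega> (\<lambda>x. u x + v x) x = wgrad \<Omega> u x + wgrad \<Omega> v x"
    by (rule wg_unique[OF op bd guv gs])
  have i1: "set_integrable lebesgue \<Omega> (\<lambda>x. \<kappa> x * (wgrad \<Omega> u x \<bullet> wgrad \<Omega> w x))" by (rule a_int[OF gu gw])
  have i2: "set_integrable lebesgue \<Omega> (\<lambda>x. \<kappa> x * (wgrad \<Omega> v x \<bullet> wgrad \<Omega> w x))" by (rule a_int[OF gv gw])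
  have i3: "set_integrable lebesgue \<Omega> (\<lambda>x. \<kappa> x * (wgrad \<Omega> (\<lambda>x. u x + v x) x \<bullet> wgrad \<Omega> w x))" by (rule a_int[OF guv gw])
  have "aform \<Omega> \<kappa> (\<lambda>x. u x + v x) w =
      (LINT x:\<Omega>|lebesgue. \<kappa> x * (wgrad \<Omega> u x \<bullet> wgrad \<Omega> w x) + \<kappa> x * (wgrad \<Omega> v x \<bullet> wgrad \<Omega> w x))"
    unfolding aform_def
  proof (rule set_int_cong_AE')
    show "set_borel_measurable lebesgue \<Omega> (\<lambda>x. \<kappa> x * (wgrad \<Omega> (\<lambda>x. u x + v x) x \<bullet> wgrad \<Omega> w x))"
      by (rule sint_sbm[OF i3])
    show "set_borel_measurable lebesgue \<Omega> (\<lambda>x. \<kappa> x * (wgrad \<Omega> u x \<bullet> wgrad \<Omega> w x) + \<kappa> x * (wgrad \<Omega> v x \<bullet> wgrad \<Omega> w x))"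
      by (rule sint_sbm[OF set_integral_add(1)[OF i1 i2]])
    show "AE x in lebesgue. x \<in> \<Omega> \<longrightarrow> \<kappa> x * (wgrad \<Omega> (\<lambda>x. u x + v x) x \<bullet> wgrad \<Omega> w x) =
        \<kappa> x * (wgrad \<Omega> u x \<bullet> wgrad \<Omega> w x) + \<kappa> x * (wgrad \<Omega> v x \<bullet> wgrad \<Omega> w x)"
      using ae by eventually_elim (auto simp: inner_add_left distrib_left)
  qed
  also have "\<dots> = aform \<Omega> \<kappa> u w + aform \<Omega> \<kappa> v w"
    unfolding aform_def by (rule set_integral_add(2)[OF i1 i2])
  finally show ?thesis .
qed

lemma aform_scale:
  assumes u: "u \<in> WGs \<Omega>" and w: "w \<in> WGs \<Omega>"
  shows "aform \<Omega> \<kappa> (\<lambda>x. c * u x) w = c * aform \<Omega> \<kappa> u w"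
proof -
  have gu: "weak_grad \<Omega> u (wgrad \<Omega> u)" and gw: "weak_grad \<Omega> w (wgrad \<Omega> w)" using u w WGs_wg by auto
  have gc: "weak_grad \<Omega> (\<lambda>x. c * u x) (wgrad \<Omega> (\<lambda>x. c * u x))"
    using WGs_wg WGs_scale[OF u] by blast
  have gs: "weak_grad \<Omega> (\<lambda>x. c * u x) (\<lambda>x. c *\<^sub>R wgrad \<Omega> u x)" using wg_scale[OF op bd gu] .
  have ae: "AE x in lebesgue. x \<in> \<Omega> \<longrightarrow> wgrad \<Omega> (\<lambda>x. c * u x) x = c *\<^sub>R wgrad \<Omega> u x"
    by (rule wg_unique[OF op bd gc gs])
  have i1: "set_integrable lebesgue \<Omega> (\<lambda>x. \<kappa> x * (wgrad \<Omega> u x \<bullet> wgrad \<Omega> w x))" by (rule a_int[OF gu gw])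
  have i3: "set_integrable lebesgue \<Omega> (\<lambda>x. \<kappa> x * (wgrad \<Omega> (\<lambda>x. c * u x) x \<bullet> wgrad \<Omega> w x))" by (rule a_int[OF gc gw])
  have "aform \<Omega> \<kappa> (\<lambda>x. c * u x) w = (LINT x:\<Omega>|lebesgue. c * (\<kappa> x * (wgrad \<Omega> u x \<bullet> wgrad \<Omega> w x)))"
    unfolding aform_def
  proof (rule set_int_cong_AE')
    show "set_borel_measurable lebesgue \<Omega> (\<lambda>x. \<kappa> x * (wgrad \<Omega> (\<lambda>x. c * u x) x \<bullet> wgrad \<Omega> w x))"
      by (rule sint_sbm[OF i3])
    show "set_borel_measurable lebesgue \<Omega> (\<lambda>x. c * (\<kappa> x * (wgrad \<Omega> u x \<bullet> wgrad \<Omega> w x)))"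
      by (rule sbm_scale[OF sint_sbm[OF i1]])
    show "AE x in lebesgue. x \<in> \<Omega> \<longrightarrow> \<kappa> x * (wgrad \<Omega> (\<lambda>x. c * u x) x \<bullet> wgrad \<Omega> w x) =
        c * (\<kappa> x * (wgrad \<Omega> u x \<bullet> wgrad \<Omega> w x))"
      using ae by eventually_elim auto
  qed
  also have "\<dots> = c * aform \<Omega> \<kappa> u w" unfolding aform_def by simp
  finally show ?thesis .
qed

lemma aform_pos: "aform \<Omega> \<kappa> u u \<ge> 0"
  unfolding aform_def
  by (rule set_int_nonneg_AE) (use kpos k0 in \<open>eventually_elim, auto\<close>)

lemma aform_null:
  assumes u: "u \<in> WGs \<Omega>" and z: "l2ip \<Omega> u u = 0"
  shows "aform \<Omega> \<kappa> u u = 0"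
proof -
  have gu: "weak_grad \<Omega> u (wgrad \<Omega> u)" using u WGs_wg by auto
  have g0: "weak_grad \<Omega> u (\<lambda>x. 0)"
    by (rule wg_null[OF op bd WGs_L2[OF u] l2ip_null[OF WGs_L2[OF u] z]])
  have ae: "AE x in lebesgue. x \<in> \<Omega> \<longrightarrow> wgrad \<Omega> u x = 0" using wg_unique[OF op bd gu g0] .
  show ?thesis
    unfolding aform_def
    by (rule set_int_AE_zero[OF sint_sbm[OF a_int[OF gu gu]]]) (use ae in \<open>eventually_elim, auto\<close>)
qed

end

end


locale bform =
  fixes W :: "('a \<Rightarrow> real) set" and L :: "('a \<Rightarrow> real) \<Rightarrow> ('a \<Rightarrow> real) \<Rightarrow> real"
  assumes W0: "(\<lambda>x. 0) \<in> W"
    and Wadd: "f \<in> W \<Longrightarrow> g \<in> W \<Longrightarrow> (\<lambda>x. f x + g x) \<in> W"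
    and Wscale: "f \<in> W \<Longrightarrow> (\<lambda>x. c * f x) \<in> W"
    and Lsym: "L f g = L g f"
    and Ladd: "f \<in> W \<Longrightarrow> g \<in> W \<Longrightarrow> h \<in> W \<Longrightarrow> L (\<lambda>x. f x + g x) h = L f h + L g h"
    and Lscale: "f \<in> W \<Longrightarrow> h \<in> W \<Longrightarrow> L (\<lambda>x. c * f x) h = c * L f h"
    and Lpos: "f \<in> W \<Longrightarrow> L f f \<ge> 0"
begin

lemma Wdiff: "f \<in> W \<Longrightarrow> g \<in> W \<Longrightarrow> (\<lambda>x. f x - g x) \<in> W"
proof -
  assume "f \<in> W" "g \<in> W"
  then have "(\<lambda>x. f x + (-1) * g x) \<in> W" by (intro Wadd Wscale)
  then show ?thesis by simp
qed

lemma Wsum: "(\<And>k. k < m \<Longrightarrow> e k \<in> W) \<Longrightarrow> (\<lambda>x. \<Sum>k<m. a k * e k x) \<in> W" for m :: nat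
proof (induction m)
  case 0 then show ?case using W0 by simp
next
  case (Suc m)
  then have "(\<lambda>x. (\<Sum>k<m. a k * e k x) + a m * e m x) \<in> W"
    by (intro Wadd Wscale) auto
  then show ?case by simp
qed

lemma Wsum_set: "finite B \<Longrightarrow> B \<subseteq> W \<Longrightarrow> (\<lambda>x. \<Sum>b\<in>B. c b * b x) \<in> W"
proof (induction B rule: finite_induct)
  case empty then show ?case using W0 by simp
next
  case (insert b B)
  then have "(\<lambda>x. c b * b x + (\<Sum>b\<in>B. c b * b x)) \<in> W"
    by (intro Wadd Wscale) auto
  then show ?case using insert by simp
qed

lemma Lzero: "h \<in> W \<Longrightarrow> L (\<lambda>x. 0) h = 0"
  using Lscale[OF W0, of h 0] by simp

lemma Ldiff: "f \<in> W \<Longrightarrow> g \<in> W \<Longrightarrow> h \<in> W \<Longrightarrow> L (\<lambda>x. f x - g x) h = L f h - L g h"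
proof -
  assume f: "f \<in> W" and g: "g \<in> W" and h: "h \<in> W"
  have "L (\<lambda>x. f x + (-1) * g x) h = L f h + L (\<lambda>x. (-1) * g x) h"
    using f g h by (intro Ladd Wscale)
  also have "\<dots> = L f h - L g h" using Lscale[OF g h, of "-1"] by simp
  finally show ?thesis by simp
qed

lemma Ladd2: "f \<in> W \<Longrightarrow> g \<in> W \<Longrightarrow> h \<in> W \<Longrightarrow> L h (\<lambda>x. f x + g x) = L h f + L h g"
  using Ladd by (simp add: Lsym[of h])

lemma Lscale2: "f \<in> W \<Longrightarrow> h \<in> W \<Longrightarrow> L h (\<lambda>x. c * f x) = c * L h f"
  using Lscale by (simp add: Lsym[of h])

lemma Ldiff2: "f \<in> W \<Longrightarrow> g \<in> W \<Longrightarrow> h \<in> W \<Longrightarrow> L h (\<lambda>x. f x - g x) = L h f - L h g"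
  using Ldiff by (simp add: Lsym[of h])

lemma Lsum: "(\<And>k. k < m \<Longrightarrow> e k \<in> W) \<Longrightarrow> h \<in> W \<Longrightarrow>
    L (\<lambda>x. \<Sum>k<m. a k * e k x) h = (\<Sum>k<m. a k * L (e k) h)" for m :: nat
proof (induction m)
  case 0 then show ?case using Lzero by simp
next
  case (Suc m)
  have "L (\<lambda>x. (\<Sum>k<m. a k * e k x) + a m * e m x) h = L (\<lambda>x. \<Sum>k<m. a k * e k x) h + L (\<lambda>x. a m * e m x) h"
    using Suc.prems by (intro Ladd Wsum Wscale) auto
  also have "\<dots> = (\<Sum>k<m. a k * L (e k) h) + a m * L (e m) h"
    using Suc by (simp add: Lscale)
  finally show ?case by simp
qed

lemma quad: "f \<in> W \<Longrightarrow> g \<in> W \<Longrightarrow>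
   L (\<lambda>x. f x + t * g x) (\<lambda>x. f x + t * g x) = L f f + 2 * t * L f g + t\<^sup>2 * L g g"
proof -
  assume f: "f \<in> W" and g: "g \<in> W"
  have tg: "(\<lambda>x. t * g x) \<in> W" using g by (rule Wscale)
  have s: "(\<lambda>x. f x + t * g x) \<in> W" using f tg by (rule Wadd)
  have "L (\<lambda>x. f x + t * g x) (\<lambda>x. f x + t * g x) = L f (\<lambda>x. f x + t * g x) + t * L g (\<lambda>x. f x + t * g x)"
    using f g tg s by (simp add: Ladd Lscale)
  also have "\<dots> = L f f + t * L f g + t * (L g f + t * L g g)"
    using f g tg by (simp add: Ladd2 Lscale2)
  finally show ?thesis by (simp add: Lsym[of g f] power2_eq_square algebra_simps)
qed

lemma CS_sq: "f \<in> W \<Longrightarrow> g \<in> W \<Longrightarrow> (L f g)\<^sup>2 \<le> L f f * L g g"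
proof -
  assume f: "f \<in> W" and g: "g \<in> W"
  define A B C where "A = L f f" "B = L f g" "C = L g g"
  have nn: "0 \<le> A + 2 * t * B + t\<^sup>2 * C" for t
  proof -
    have "0 \<le> L (\<lambda>x. f x + t * g x) (\<lambda>x. f x + t * g x)" by (rule Lpos) (intro Wadd Wscale f g)
    then show ?thesis using quad[OF f g, of t] unfolding A_B_C_def by simp
  qed
  have C0: "C \<ge> 0" using Lpos[OF g] unfolding A_B_C_def by simp
  show ?thesis
  proof (cases "C = 0")
    case True
    have "B = 0"
    proof (rule ccontr)
      assume "B \<noteq> 0"
      have "0 \<le> A + 2 * (- (A + 1) / (2 * B)) * B + (- (A + 1) / (2 * B))\<^sup>2 * C" by (rule nn)
      also have "\<dots> = -1" using \<open>B \<noteq> 0\<close> True by (simp add: field_simps)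
      finally show False by simp
    qed
    then show ?thesis using True unfolding A_B_C_def by simp
  next
    case False
    then have Cp: "C > 0" using C0 by simp
    have "0 \<le> A + 2 * (- B / C) * B + (- B / C)\<^sup>2 * C" by (rule nn)
    also have "\<dots> = A - B\<^sup>2 / C" using Cp by (simp add: power2_eq_square)
    finally have "B\<^sup>2 / C \<le> A" by simp
    then have "B\<^sup>2 \<le> A * C" using Cp by (simp add: field_simps)
    then show ?thesis unfolding A_B_C_def .
  qed
qed

definition nrm :: "('a \<Rightarrow> real) \<Rightarrow> real" where "nrm f = sqrt (L f f)"

lemma nrm_nonneg: "f \<in> W \<Longrightarrow> nrm f \<ge> 0" unfolding nrm_def
  using Lpos by simp

lemma CS: "f \<in> W \<Longrightarrow> g \<in> W \<Longrightarrow> \<bar>L f g\<bar> \<le> nrm f * nrm g"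
proof -
  assume f: "f \<in> W" and g: "g \<in> W"
  have "sqrt ((L f g)\<^sup>2) \<le> sqrt (L f f * L g g)" using CS_sq[OF f g] by (rule real_sqrt_le_mono)
  then show ?thesis unfolding nrm_def using Lpos[OF f] Lpos[OF g] by (simp add: real_sqrt_mult)
qed

lemma Lnull: "f \<in> W \<Longrightarrow> g \<in> W \<Longrightarrow> L f f = 0 \<Longrightarrow> L f g = 0"
proof -
  assume f: "f \<in> W" and g: "g \<in> W" and z: "L f f = 0"
  have "\<bar>L f g\<bar> \<le> nrm f * nrm g" by (rule CS[OF f g])
  also have "nrm f = 0" unfolding nrm_def z by simp
  finally show ?thesis by simp
qed

lemma nrm_sq: "f \<in> W \<Longrightarrow> (nrm f)\<^sup>2 = L f f"
proof -
  assume "f \<in> W"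
  then have "L f f \<ge> 0" by (rule Lpos)
  then show ?thesis unfolding nrm_def by (rule real_sqrt_pow2)
qed

lemma nrm_add: "f \<in> W \<Longrightarrow> g \<in> W \<Longrightarrow> nrm (\<lambda>x. f x + g x) \<le> nrm f + nrm g"
proof -
  assume f: "f \<in> W" and g: "g \<in> W"
  have "L (\<lambda>x. f x + 1 * g x) (\<lambda>x. f x + 1 * g x) = L f f + 2 * L f g + L g g"
    using quad[OF f g, of 1] by simp
  then have e: "(nrm (\<lambda>x. f x + g x))\<^sup>2 = (nrm f)\<^sup>2 + 2 * L f g + (nrm g)\<^sup>2"
    using nrm_sq[OF Wadd[OF f g]] nrm_sq[OF f] nrm_sq[OF g] by simp
  have "L f g \<le> nrm f * nrm g" using CS[OF f g] by linarith
  then have sq: "(nrm (\<lambda>x. f x + g x))\<^sup>2 \<le> (nrm f + nrm g)\<^sup>2"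
    unfolding e by (simp add: power2_eq_square algebra_simps)
  have "0 \<le> nrm f + nrm g" using nrm_nonneg[OF f] nrm_nonneg[OF g] by linarith
  with sq show ?thesis by (rule power2_le_imp_le)
qed

lemma nrm_scale: "f \<in> W \<Longrightarrow> nrm (\<lambda>x. c * f x) = \<bar>c\<bar> * nrm f"
proof -
  assume f: "f \<in> W"
  have "L (\<lambda>x. c * f x) (\<lambda>x. c * f x) = c\<^sup>2 * L f f"
    using f Wscale[OF f] by (simp add: Lscale Lscale2 power2_eq_square)
  then show ?thesis unfolding nrm_def by (simp add: real_sqrt_mult)
qed

lemma nrm_sum: "(\<And>k. k < m \<Longrightarrow> e k \<in> W) \<Longrightarrow> nrm (\<lambda>x. \<Sum>k<m. a k * e k x) \<le> (\<Sum>k<m. \<bar>a k\<bar> * nrm (e k))" for m :: nat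
proof (induction m)
  case 0 then show ?case using Lzero[OF W0] by (simp add: nrm_def)
next
  case (Suc m)
  have "nrm (\<lambda>x. (\<Sum>k<m. a k * e k x) + a m * e m x) \<le> nrm (\<lambda>x. \<Sum>k<m. a k * e k x) + nrm (\<lambda>x. a m * e m x)"
    using Suc.prems by (intro nrm_add Wsum Wscale) auto
  also have "\<dots> \<le> (\<Sum>k<m. \<bar>a k\<bar> * nrm (e k)) + \<bar>a m\<bar> * nrm (e m)"
    using Suc by (simp add: nrm_scale)
  finally show ?case by simp
qed

end


context bform
begin

lemma delta_sum: "j < m \<Longrightarrow> (\<Sum>k<m. a k * (if k = j then 1 else 0)) = (a j :: real)" for m :: nat
proof -
  assume "j < m"
  have "(\<Sum>k<m. a k * (if k = j then 1 else 0)) = (\<Sum>k<m. if k = j then a k else 0)"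
    by (rule sum.cong) auto
  also have "\<dots> = a j" using \<open>j < m\<close> by (simp add: sum.delta')
  finally show ?thesis .
qed

lemma GS:
  assumes "finite B" "B \<subseteq> W"
  shows "\<exists>(e :: nat \<Rightarrow> 'a \<Rightarrow> real) m. (\<forall>k<m. e k \<in> W) \<and>
     (\<forall>j<m. \<forall>k<m. L (e j) (e k) = (if j = k then 1 else 0)) \<and>
     (\<forall>c. \<exists>n\<in>W. L n n = 0 \<and>
        (\<lambda>x. \<Sum>b\<in>B. c b * b x) = (\<lambda>x. (\<Sum>k<m. L (\<lambda>y. \<Sum>b\<in>B. c b * b y) (e k) * e k x) + n x))"
  using assms
proof (induction B rule: finite_induct)
  case empty
  show ?case
    by (rule exI[of _ "\<lambda>k. (\<lambda>x. 0)"], rule exI[of _ 0]) (use W0 Lzero[OF W0] in auto)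
next
  case (insert b B)
  have bW: "b \<in> W" and BW: "B \<subseteq> W" using insert.prems by auto
  obtain e :: "nat \<Rightarrow> 'a \<Rightarrow> real" and m :: nat where eW: "\<forall>k<m. e k \<in> W"
    and orth: "\<forall>j<m. \<forall>k<m. L (e j) (e k) = (if j = k then 1 else 0)"
    and rep: "\<forall>c. \<exists>n\<in>W. L n n = 0 \<and>
        (\<lambda>x. \<Sum>b\<in>B. c b * b x) = (\<lambda>x. (\<Sum>k<m. L (\<lambda>y. \<Sum>b\<in>B. c b * b y) (e k) * e k x) + n x)"
    using insert.IH[OF BW] by blast
  define r where "r = (\<lambda>x. b x - (\<Sum>k<m. L b (e k) * e k x))"
  have SbW: "(\<lambda>x. \<Sum>k<m. L b (e k) * e k x) \<in> W" using eW by (intro Wsum) auto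
  have rW: "r \<in> W" unfolding r_def using bW SbW by (rule Wdiff)
  have Lre: "L r (e j) = 0" if j: "j < m" for j
  proof -
    have "L r (e j) = L b (e j) - L (\<lambda>x. \<Sum>k<m. L b (e k) * e k x) (e j)"
      unfolding r_def using bW SbW eW j by (intro Ldiff) auto
    also have "L (\<lambda>x. \<Sum>k<m. L b (e k) * e k x) (e j) = (\<Sum>k<m. L b (e k) * L (e k) (e j))"
      using eW j by (intro Lsum) auto
    also have "\<dots> = (\<Sum>k<m. L b (e k) * (if k = j then 1 else 0))"
      using orth j by (intro sum.cong) auto
    also have "\<dots> = L b (e j)" using j by (rule delta_sum)
    finally show ?thesis by simp
  qed
  have beq: "b = (\<lambda>x. (\<Sum>k<m. L b (e k) * e k x) + r x)" unfolding r_def by simp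
  have Lrb: "L r b = L r r"
  proof -
    have "L r b = L (\<lambda>x. (\<Sum>k<m. L b (e k) * e k x) + r x) r" by (subst beq) (simp add: Lsym)
    also have "\<dots> = L (\<lambda>x. \<Sum>k<m. L b (e k) * e k x) r + L r r"
      by (rule Ladd[OF SbW rW rW])
    also have "L (\<lambda>x. \<Sum>k<m. L b (e k) * e k x) r = (\<Sum>k<m. L b (e k) * L (e k) r)"
      using eW rW by (intro Lsum) auto
    also have "\<dots> = 0" using Lre by (simp add: Lsym)
    finally show ?thesis by simp
  qed
  have core: "\<exists>nw\<in>W. L nw nw = 0 \<and> L nw r = 0 \<and>
      (\<forall>x. (\<Sum>b\<in>insert b B. c b * b x) = (\<Sum>k<m. L (\<lambda>y. \<Sum>b\<in>insert b B. c b * b y) (e k) * e k x) + c b * r x + nw x) \<and>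
      L (\<lambda>y. \<Sum>b\<in>insert b B. c b * b y) r = c b * L r r" for c
  proof -
    define w where "w = (\<lambda>x. \<Sum>b\<in>B. c b * b x)"
    have wW: "w \<in> W" unfolding w_def using insert.hyps(1) BW by (rule Wsum_set)
    obtain nw where nwW: "nw \<in> W" and nw0: "L nw nw = 0"
      and wrep: "w = (\<lambda>x. (\<Sum>k<m. L w (e k) * e k x) + nw x)"
      using rep unfolding w_def by blast
    have veq: "(\<lambda>y. \<Sum>b\<in>insert b B. c b * b y) = (\<lambda>x. c b * b x + w x)"
      unfolding w_def using insert.hyps by simp
    have cbW: "(\<lambda>x. c b * b x) \<in> W" using bW by (rule Wscale)
    have Lv: "L (\<lambda>y. \<Sum>b\<in>insert b B. c b * b y) h = c b * L b h + L w h" if "h \<in> W" for h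
      unfolding veq using cbW wW that bW by (simp add: Ladd Lscale)
    have SwW: "(\<lambda>x. \<Sum>k<m. L w (e k) * e k x) \<in> W" using eW by (intro Wsum) auto
    have Lnwr: "L nw r = 0" using Lnull[OF nwW rW nw0] .
    have Lwr: "L w r = 0"
    proof -
      have "L w r = L (\<lambda>x. (\<Sum>k<m. L w (e k) * e k x) + nw x) r" by (subst wrep) simp
      also have "\<dots> = L (\<lambda>x. \<Sum>k<m. L w (e k) * e k x) r + L nw r" by (rule Ladd[OF SwW nwW rW])
      also have "L (\<lambda>x. \<Sum>k<m. L w (e k) * e k x) r = (\<Sum>k<m. L w (e k) * L (e k) r)"
        using eW rW by (intro Lsum) auto
      also have "\<dots> = 0" using Lre by (simp add: Lsym)
      finally show ?thesis using Lnwr by simp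
    qed
    have pt: "(\<Sum>b\<in>insert b B. c b * b x) = (\<Sum>k<m. L (\<lambda>y. \<Sum>b\<in>insert b B. c b * b y) (e k) * e k x) + c b * r x + nw x" for x
    proof -
      have s1: "(\<Sum>k<m. L (\<lambda>y. \<Sum>b\<in>insert b B. c b * b y) (e k) * e k x) =
          c b * (\<Sum>k<m. L b (e k) * e k x) + (\<Sum>k<m. L w (e k) * e k x)"
      proof -
        have "(\<Sum>k<m. L (\<lambda>y. \<Sum>b\<in>insert b B. c b * b y) (e k) * e k x) = (\<Sum>k<m. (c b * L b (e k) + L w (e k)) * e k x)"
          using eW Lv by (intro sum.cong) auto
        also have "\<dots> = c b * (\<Sum>k<m. L b (e k) * e k x) + (\<Sum>k<m. L w (e k) * e k x)"
          by (simp add: sum.distrib sum_distrib_left algebra_simps)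
        finally show ?thesis .
      qed
      have "(\<Sum>b\<in>insert b B. c b * b x) = c b * b x + w x" using fun_cong[OF veq, of x] by simp
      also have "b x = (\<Sum>k<m. L b (e k) * e k x) + r x" unfolding r_def by simp
      also have "w x = (\<Sum>k<m. L w (e k) * e k x) + nw x" using fun_cong[OF wrep, of x] by simp
      finally show ?thesis unfolding s1 by (simp add: algebra_simps)
    qed
    have "L (\<lambda>y. \<Sum>b\<in>insert b B. c b * b y) r = c b * L b r + L w r" using Lv[OF rW] .
    then have "L (\<lambda>y. \<Sum>b\<in>insert b B. c b * b y) r = c b * L r r" using Lwr Lrb by (simp add: Lsym[of b r])
    then show ?thesis using nwW nw0 Lnwr pt by blast
  qed
  show ?case
  proof (cases "L r r = 0")
    case True
    have "\<forall>c. \<exists>n\<in>W. L n n = 0 \<and> (\<lambda>x. \<Sum>b\<in>insert b B. c b * b x) = (\<lambda>x. (\<Sum>k<m. L (\<lambda>y. \<Sum>b\<in>insert b B. c b * b y) (e k) * e k x) + n x)"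
    proof
      fix c
      obtain nw where nwW: "nw \<in> W" and nw0: "L nw nw = 0" and nwr: "L nw r = 0"
        and pt: "\<And>x. (\<Sum>b\<in>insert b B. c b * b x) = (\<Sum>k<m. L (\<lambda>y. \<Sum>b\<in>insert b B. c b * b y) (e k) * e k x) + c b * r x + nw x"
        using core[of c] by blast
      define n' where "n' = (\<lambda>x. c b * r x + nw x)"
      have n'W: "n' \<in> W" unfolding n'_def using rW nwW by (intro Wadd Wscale)
      have "L n' n' = c b * L r n' + L nw n'"
        unfolding n'_def using rW nwW n'W[unfolded n'_def] by (simp add: Ladd Lscale Wscale)
      also have "\<dots> = 0" using Lnull[OF rW n'W True] Lnull[OF nwW n'W nw0] by simp
      finally have "L n' n' = 0" .
      moreover have "(\<lambda>x. \<Sum>b\<in>insert b B. c b * b x) = (\<lambda>x. (\<Sum>k<m. L (\<lambda>y. \<Sum>b\<in>insert b B. c b * b y) (e k) * e k x) + n' x)"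
      proof
        fix x show "(\<Sum>b\<in>insert b B. c b * b x) = (\<Sum>k<m. L (\<lambda>y. \<Sum>b\<in>insert b B. c b * b y) (e k) * e k x) + n' x"
          using pt[of x] by (simp add: n'_def)
      qed
      ultimately show "\<exists>n\<in>W. L n n = 0 \<and> (\<lambda>x. \<Sum>b\<in>insert b B. c b * b x) = (\<lambda>x. (\<Sum>k<m. L (\<lambda>y. \<Sum>b\<in>insert b B. c b * b y) (e k) * e k x) + n x)"
        using n'W by blast
    qed
    then show ?thesis using eW orth by blast
  next
    case False
    have rpos: "L r r > 0" using False Lpos[OF rW] by simp
    define s where "s = sqrt (L r r)"
    have spos: "s > 0" unfolding s_def using rpos by simp
    have ss: "s * s = L r r" unfolding s_def using rpos by simp
    define em where "em = (\<lambda>x. (1 / s) * r x)"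
    have emW: "em \<in> W" unfolding em_def using rW by (rule Wscale)
    define e' where "e' = e(m := em)"
    have e'W: "\<forall>k<Suc m. e' k \<in> W" using eW emW unfolding e'_def by (auto simp: less_Suc_eq)
    have Lem: "L em (e j) = 0" if "j < m" for j
      unfolding em_def using Lscale[OF rW, of "e j" "1/s"] eW that Lre by simp
    have Lemem: "L em em = 1"
    proof -
      have a: "L (\<lambda>x. (1/s) * r x) em = (1/s) * L r em" by (rule Lscale[OF rW emW])
      have b: "L r (\<lambda>x. (1/s) * r x) = (1/s) * L r r" by (rule Lscale2[OF rW rW])
      have "L em em = (1/s) * ((1/s) * L r r)"
        using a b unfolding em_def by simp
      also have "\<dots> = 1" using ss[symmetric] spos by (simp add: field_simps)
      finally show ?thesis .
    qed
    have orth': "\<forall>j<Suc m. \<forall>k<Suc m. L (e' j) (e' k) = (if j = k then 1 else 0)"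
    proof (intro allI impI)
      fix j k assume j: "j < Suc m" and k: "k < Suc m"
      show "L (e' j) (e' k) = (if j = k then 1 else 0)"
      proof (cases "j = m")
        case True
        then show ?thesis using k Lem Lemem unfolding e'_def by (auto simp: less_Suc_eq)
      next
        case jm: False
        show ?thesis
        proof (cases "k = m")
          case True
          then show ?thesis using j jm Lem[of j] unfolding e'_def by (auto simp: less_Suc_eq Lsym[of "e j"])
        next
          case False
          then show ?thesis using j jm k orth unfolding e'_def by (auto simp: less_Suc_eq)
        qed
      qed
    qed
    have "\<forall>c. \<exists>n\<in>W. L n n = 0 \<and> (\<lambda>x. \<Sum>b\<in>insert b B. c b * b x) = (\<lambda>x. (\<Sum>k<Suc m. L (\<lambda>y. \<Sum>b\<in>insert b B. c b * b y) (e' k) * e' k x) + n x)"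
    proof
      fix c
      obtain nw where nwW: "nw \<in> W" and nw0: "L nw nw = 0"
        and pt: "\<And>x. (\<Sum>b\<in>insert b B. c b * b x) = (\<Sum>k<m. L (\<lambda>y. \<Sum>b\<in>insert b B. c b * b y) (e k) * e k x) + c b * r x + nw x"
        and Lvr: "L (\<lambda>y. \<Sum>b\<in>insert b B. c b * b y) r = c b * L r r"
        using core[of c] by blast
      let ?v = "\<lambda>y. \<Sum>b\<in>insert b B. c b * b y"
      have vW: "?v \<in> W" using insert.hyps(1) insert.prems by (intro Wsum_set) auto
      have Lvem: "L ?v em = c b * s"
      proof -
        have "L ?v em = (1/s) * L ?v r" unfolding em_def by (rule Lscale2[OF rW vW])
        also have "\<dots> = (1/s) * (c b * (s * s))" using Lvr ss by simp
        also have "\<dots> = c b * s" using spos by simp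
        finally show ?thesis .
      qed
      have "(\<lambda>x. \<Sum>b\<in>insert b B. c b * b x) = (\<lambda>x. (\<Sum>k<Suc m. L ?v (e' k) * e' k x) + nw x)"
      proof
        fix x
        have "(\<Sum>k<Suc m. L ?v (e' k) * e' k x) = (\<Sum>k<m. L ?v (e' k) * e' k x) + L ?v em * em x"
          unfolding e'_def by simp
        also have "(\<Sum>k<m. L ?v (e' k) * e' k x) = (\<Sum>k<m. L ?v (e k) * e k x)"
          unfolding e'_def by (intro sum.cong) auto
        also have "L ?v em * em x = c b * r x"
        proof -
          have "em x = (1/s) * r x" by (simp add: em_def)
          then have "L ?v em * em x = (c b * s) * ((1/s) * r x)" by (simp only: Lvem)
          then show ?thesis using spos by simp
        qed
        finally show "(\<Sum>b\<in>insert b B. c b * b x) = (\<Sum>k<Suc m. L ?v (e' k) * e' k x) + nw x"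
          using pt[of x] by simp
      qed
      then show "\<exists>n\<in>W. L n n = 0 \<and> (\<lambda>x. \<Sum>b\<in>insert b B. c b * b x) = (\<lambda>x. (\<Sum>k<Suc m. L ?v (e' k) * e' k x) + n x)"
        using nwW nw0 by blast
    qed
    then show ?thesis using e'W orth' by blast
  qed
qed

end


lemma span_bound:
  assumes LB: "bform W L" and AB: "bform W A"
    and null: "\<And>n. n \<in> W \<Longrightarrow> L n n = 0 \<Longrightarrow> A n n = 0"
    and fin: "finite B" and BW: "B \<subseteq> W"
  shows "\<exists>C. \<forall>c. sqrt (A (\<lambda>x. \<Sum>b\<in>B. c b * b x) (\<lambda>x. \<Sum>b\<in>B. c b * b x))
      \<le> C * sqrt (L (\<lambda>x. \<Sum>b\<in>B. c b * b x) (\<lambda>x. \<Sum>b\<in>B. c b * b x))"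
proof -
  interpret Lb: bform W L by (rule LB)
  interpret Ab: bform W A by (rule AB)
  obtain e :: "nat \<Rightarrow> 'a \<Rightarrow> real" and m :: nat where eW: "\<forall>k<m. e k \<in> W"
    and orth: "\<forall>j<m. \<forall>k<m. L (e j) (e k) = (if j = k then 1 else 0)"
    and rep: "\<forall>c. \<exists>n\<in>W. L n n = 0 \<and>
        (\<lambda>x. \<Sum>b\<in>B. c b * b x) = (\<lambda>x. (\<Sum>k<m. L (\<lambda>y. \<Sum>b\<in>B. c b * b y) (e k) * e k x) + n x)"
    using Lb.GS[OF fin BW] by blast
  define C where "C = (\<Sum>k<m. Ab.nrm (e k))"
  have "sqrt (A (\<lambda>x. \<Sum>b\<in>B. c b * b x) (\<lambda>x. \<Sum>b\<in>B. c b * b x))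
      \<le> C * sqrt (L (\<lambda>x. \<Sum>b\<in>B. c b * b x) (\<lambda>x. \<Sum>b\<in>B. c b * b x))" for c
  proof -
    define v where "v = (\<lambda>x. \<Sum>b\<in>B. c b * b x)"
    have vW: "v \<in> W" unfolding v_def using fin BW by (rule Lb.Wsum_set)
    obtain n where nW: "n \<in> W" and n0: "L n n = 0"
      and veq: "v = (\<lambda>x. (\<Sum>k<m. L v (e k) * e k x) + n x)"
      using rep unfolding v_def by blast
    define S where "S = (\<lambda>x. \<Sum>k<m. L v (e k) * e k x)"
    have SW: "S \<in> W" unfolding S_def using eW by (intro Lb.Wsum) auto
    have veq': "v = (\<lambda>x. S x + n x)" using veq unfolding S_def .
    have "Ab.nrm v \<le> Ab.nrm S + Ab.nrm n" unfolding veq' by (rule Ab.nrm_add[OF SW nW])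
    also have "Ab.nrm n = 0" unfolding Ab.nrm_def using null[OF nW n0] by simp
    also have "Ab.nrm S \<le> (\<Sum>k<m. \<bar>L v (e k)\<bar> * Ab.nrm (e k))"
      unfolding S_def by (rule Ab.nrm_sum) (use eW in auto)
    also have "\<dots> \<le> (\<Sum>k<m. Lb.nrm v * Ab.nrm (e k))"
    proof (rule sum_mono)
      fix k assume "k \<in> {..<m}"
      then have k: "k < m" by simp
      have "\<bar>L v (e k)\<bar> \<le> Lb.nrm v * Lb.nrm (e k)" using Lb.CS[OF vW] eW k by auto
      also have "Lb.nrm (e k) = 1" unfolding Lb.nrm_def using orth k by simp
      finally show "\<bar>L v (e k)\<bar> * Ab.nrm (e k) \<le> Lb.nrm v * Ab.nrm (e k)"
        using Ab.nrm_nonneg eW k by (intro mult_right_mono) auto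
    qed
    also have "\<dots> = C * Lb.nrm v" unfolding C_def by (simp add: sum_distrib_left mult.commute)
    finally show ?thesis unfolding v_def Ab.nrm_def Lb.nrm_def by simp
  qed
  then show ?thesis by blast
qed


definition En :: "(('a \<Rightarrow> real) \<Rightarrow> ('a \<Rightarrow> real) \<Rightarrow> real) \<Rightarrow> (('a \<Rightarrow> real) \<Rightarrow> ('a \<Rightarrow> real) \<Rightarrow> real) \<Rightarrow> real \<Rightarrow>
    (nat \<Rightarrow> 'a \<Rightarrow> real) \<Rightarrow> (nat \<Rightarrow> 'a \<Rightarrow> real) \<Rightarrow> nat \<Rightarrow> real" where
  "En L A \<tau> u1 u2 n =
     L (\<lambda>x. (u1 (n+1) x + u2 (n+1) x) - (u1 n x + u2 n x)) (\<lambda>x. (u1 (n+1) x + u2 (n+1) x) - (u1 n x + u2 n x))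
     + \<tau>\<^sup>2 / 2 * (A (u1 (n+1)) (u1 (n+1)) + A (u1 n) (u1 n) + A (u2 (n+1)) (u2 (n+1)) + A (u2 n) (u2 n))
     + \<tau>\<^sup>2 * A (u2 (n+1)) (u1 n) + \<tau>\<^sup>2 * A (u1 (n+1)) (u2 n)
     - \<tau>\<^sup>2 / 2 * A (\<lambda>x. u2 (n+1) x - u2 n x) (\<lambda>x. u2 (n+1) x - u2 n x)"

lemma conservation:
  assumes LB: "bform W L" and AB: "bform W A"
    and uW: "u1 k \<in> W" "u1 (Suc k) \<in> W" "u1 (Suc (Suc k)) \<in> W"
            "u2 k \<in> W" "u2 (Suc k) \<in> W" "u2 (Suc (Suc k)) \<in> W"
    and e1: "L (\<lambda>x. (u1 (Suc k+1) x + u2 (Suc k+1) x) - 2 * (u1 (Suc k) x + u2 (Suc k) x) + (u1 (Suc k-1) x + u2 (Suc k-1) x))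
               (\<lambda>x. u1 (Suc k+1) x - u1 (Suc k-1) x)
             + \<tau>\<^sup>2 / 2 * A (\<lambda>x. u1 (Suc k+1) x + u1 (Suc k-1) x + 2 * u2 (Suc k) x) (\<lambda>x. u1 (Suc k+1) x - u1 (Suc k-1) x) = 0"
    and e2: "L (\<lambda>x. (u1 (Suc k+1) x + u2 (Suc k+1) x) - 2 * (u1 (Suc k) x + u2 (Suc k) x) + (u1 (Suc k-1) x + u2 (Suc k-1) x))
               (\<lambda>x. u2 (Suc k+1) x - u2 (Suc k-1) x)
             + \<tau>\<^sup>2 * A (\<lambda>x. u1 (Suc k) x + u2 (Suc k) x) (\<lambda>x. u2 (Suc k+1) x - u2 (Suc k-1) x) = 0"
  shows "En L A \<tau> u1 u2 (Suc k) = En L A \<tau> u1 u2 k"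
proof -
  interpret Lb: bform W L by (rule LB)
  interpret Ab: bform W A by (rule AB)
  note rules = Lb.Ladd Lb.Ldiff Lb.Lscale Lb.Ladd2 Lb.Ldiff2 Lb.Lscale2
     Ab.Ladd Ab.Ldiff Ab.Lscale Ab.Ladd2 Ab.Ldiff2 Ab.Lscale2
     Lb.Wadd Lb.Wdiff Lb.Wscale uW
  show ?thesis
    using e1 e2
    by (simp add: En_def rules Lb.Lsym Ab.Lsym algebra_simps)
qed

lemma lower_bound:
  assumes LB: "bform W L" and AB: "bform W A"
    and uW: "u1 n \<in> W" "u1 (Suc n) \<in> W" "u2 n \<in> W" "u2 (Suc n) \<in> W"
    and hL: "- L (\<lambda>x. u1 (Suc n) x - u1 n x) (\<lambda>x. u2 (Suc n) x - u2 n x)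
        \<le> \<gamma> * sqrt (L (\<lambda>x. u1 (Suc n) x - u1 n x) (\<lambda>x. u1 (Suc n) x - u1 n x))
            * sqrt (L (\<lambda>x. u2 (Suc n) x - u2 n x) (\<lambda>x. u2 (Suc n) x - u2 n x))"
    and hA1: "- A (u1 n) (u2 (Suc n)) \<le> \<gamma>a * sqrt (A (u1 n) (u1 n)) * sqrt (A (u2 (Suc n)) (u2 (Suc n)))"
    and hA2: "- A (u1 (Suc n)) (u2 n) \<le> \<gamma>a * sqrt (A (u1 (Suc n)) (u1 (Suc n))) * sqrt (A (u2 n) (u2 n))"
    and ga: "\<gamma>a \<ge> 0"
    and hal: "A (\<lambda>x. u2 (Suc n) x - u2 n x) (\<lambda>x. u2 (Suc n) x - u2 n x)
        \<le> \<alpha>\<^sup>2 * L (\<lambda>x. u2 (Suc n) x - u2 n x) (\<lambda>x. u2 (Suc n) x - u2 n x)"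
  shows "(1 - \<gamma>\<^sup>2 - \<alpha>\<^sup>2 * \<tau>\<^sup>2 / 2) * L (\<lambda>x. u2 (Suc n) x - u2 n x) (\<lambda>x. u2 (Suc n) x - u2 n x)
     + \<tau>\<^sup>2 * (1 - \<gamma>a) / 2 * (A (u1 (Suc n)) (u1 (Suc n)) + A (u1 n) (u1 n) + A (u2 (Suc n)) (u2 (Suc n)) + A (u2 n) (u2 n))
     \<le> En L A \<tau> u1 u2 n"
proof -
  interpret Lb: bform W L by (rule LB)
  interpret Ab: bform W A by (rule AB)
  note rules = Lb.Ladd Lb.Ldiff Lb.Lscale Lb.Ladd2 Lb.Ldiff2 Lb.Lscale2
     Ab.Ladd Ab.Ldiff Ab.Lscale Ab.Ladd2 Ab.Ldiff2 Ab.Lscale2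
     Lb.Wadd Lb.Wdiff Lb.Wscale uW
  define X where "X = (\<lambda>x. u1 (Suc n) x - u1 n x)"
  define Y where "Y = (\<lambda>x. u2 (Suc n) x - u2 n x)"
  have XW: "X \<in> W" unfolding X_def using uW by (intro Lb.Wdiff)
  have YW: "Y \<in> W" unfolding Y_def using uW by (intro Lb.Wdiff)
  define D where "D = (\<lambda>x. (u1 (n+1) x + u2 (n+1) x) - (u1 n x + u2 n x))"
  have LDD: "L D D = L X X + 2 * L X Y + L Y Y"
    unfolding D_def X_def Y_def by (simp add: rules Lb.Lsym algebra_simps)
  define p where "p = sqrt (L X X)"
  define q where "q = sqrt (L Y Y)"
  have p2: "p\<^sup>2 = L X X" unfolding p_def using Lb.Lpos[OF XW] by simp
  have q2: "q\<^sup>2 = L Y Y" unfolding q_def using Lb.Lpos[OF YW] by simp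
  have "- L X Y \<le> \<gamma> * p * q" using hL unfolding X_def Y_def p_def q_def .
  then have "L D D - (1 - \<gamma>\<^sup>2) * L Y Y \<ge> (p - \<gamma> * q)\<^sup>2"
    unfolding LDD p2[symmetric] q2[symmetric] by (simp add: power2_eq_square algebra_simps)
  then have I1: "L D D - (1 - \<gamma>\<^sup>2) * L Y Y \<ge> 0" by (meson order_trans zero_le_power2)
  have amgm: "- A f g \<le> \<gamma>a / 2 * (A f f + A g g)"
    if fg: "f \<in> W" "g \<in> W" and h: "- A f g \<le> \<gamma>a * sqrt (A f f) * sqrt (A g g)" for f g
  proof -
    have "2 * (sqrt (A f f) * sqrt (A g g)) \<le> (sqrt (A f f))\<^sup>2 + (sqrt (A g g))\<^sup>2"
      using sum_squares_bound[of "sqrt (A f f)" "sqrt (A g g)"] by (simp add: power2_eq_square)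
    also have "\<dots> = A f f + A g g" using Ab.Lpos[OF fg(1)] Ab.Lpos[OF fg(2)] by simp
    finally have "\<gamma>a * (2 * (sqrt (A f f) * sqrt (A g g))) \<le> \<gamma>a * (A f f + A g g)"
      by (rule mult_left_mono[OF _ ga])
    then have "\<gamma>a * (sqrt (A f f) * sqrt (A g g)) \<le> \<gamma>a / 2 * (A f f + A g g)"
      by (simp add: field_simps)
    then show ?thesis using h by (simp add: mult.assoc)
  qed
  have I2: "\<tau>\<^sup>2 * A (u2 (Suc n)) (u1 n) + \<tau>\<^sup>2 * (\<gamma>a / 2 * (A (u1 n) (u1 n) + A (u2 (Suc n)) (u2 (Suc n)))) \<ge> 0"
  proof -
    have "- A (u1 n) (u2 (Suc n)) \<le> \<gamma>a / 2 * (A (u1 n) (u1 n) + A (u2 (Suc n)) (u2 (Suc n)))"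
      using amgm uW hA1 by blast
    then have "0 \<le> A (u2 (Suc n)) (u1 n) + \<gamma>a / 2 * (A (u1 n) (u1 n) + A (u2 (Suc n)) (u2 (Suc n)))"
      using Ab.Lsym[of "u2 (Suc n)" "u1 n"] by linarith
    then have "0 \<le> \<tau>\<^sup>2 * (A (u2 (Suc n)) (u1 n) + \<gamma>a / 2 * (A (u1 n) (u1 n) + A (u2 (Suc n)) (u2 (Suc n))))"
      by simp
    then show ?thesis by (simp add: distrib_left)
  qed
  have I3: "\<tau>\<^sup>2 * A (u1 (Suc n)) (u2 n) + \<tau>\<^sup>2 * (\<gamma>a / 2 * (A (u1 (Suc n)) (u1 (Suc n)) + A (u2 n) (u2 n))) \<ge> 0"
  proof -
    have "- A (u1 (Suc n)) (u2 n) \<le> \<gamma>a / 2 * (A (u1 (Suc n)) (u1 (Suc n)) + A (u2 n) (u2 n))"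
      using amgm uW hA2 by blast
    then have "0 \<le> \<tau>\<^sup>2 * (A (u1 (Suc n)) (u2 n) + \<gamma>a / 2 * (A (u1 (Suc n)) (u1 (Suc n)) + A (u2 n) (u2 n)))"
      by simp
    then show ?thesis by (simp add: distrib_left)
  qed
  have I4: "\<tau>\<^sup>2 / 2 * (\<alpha>\<^sup>2 * L Y Y) - \<tau>\<^sup>2 / 2 * A Y Y \<ge> 0"
    using hal unfolding Y_def[symmetric] by (simp add: mult_left_mono)
  have eq: "En L A \<tau> u1 u2 n - ((1 - \<gamma>\<^sup>2 - \<alpha>\<^sup>2 * \<tau>\<^sup>2 / 2) * L Y Y
     + \<tau>\<^sup>2 * (1 - \<gamma>a) / 2 * (A (u1 (Suc n)) (u1 (Suc n)) + A (u1 n) (u1 n) + A (u2 (Suc n)) (u2 (Suc n)) + A (u2 n) (u2 n)))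
    = (L D D - (1 - \<gamma>\<^sup>2) * L Y Y)
      + (\<tau>\<^sup>2 * A (u2 (Suc n)) (u1 n) + \<tau>\<^sup>2 * (\<gamma>a / 2 * (A (u1 n) (u1 n) + A (u2 (Suc n)) (u2 (Suc n)))))
      + (\<tau>\<^sup>2 * A (u1 (Suc n)) (u2 n) + \<tau>\<^sup>2 * (\<gamma>a / 2 * (A (u1 (Suc n)) (u1 (Suc n)) + A (u2 n) (u2 n))))
      + (\<tau>\<^sup>2 / 2 * (\<alpha>\<^sup>2 * L Y Y) - \<tau>\<^sup>2 / 2 * A Y Y)"
    unfolding En_def D_def Y_def by (simp add: field_simps)
  show ?thesis using eq I1 I2 I3 I4 unfolding Y_def by linarith
qed


lemma bform_l2:
  fixes \<Omega> :: "'a::euclidean_space set"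
  assumes op: "open \<Omega>" and bd: "bounded \<Omega>"
  shows "bform (WGs \<Omega>) (l2ip \<Omega>)"
  by unfold_locales
     (auto intro: WGs_zero[OF op bd] WGs_add[OF op bd] WGs_scale[OF op bd] l2ip_sym l2ip_pos
       simp: l2ip_add[OF op bd] l2ip_scale[OF op bd] WGs_L2[OF op bd])

lemma bform_a:
  fixes \<Omega> :: "'a::euclidean_space set"
  assumes op: "open \<Omega>" and bd: "bounded \<Omega>" and kL: "Linf_on \<Omega> \<kappa>"
    and kpos: "AE x in lebesgue. x \<in> \<Omega> \<longrightarrow> \<kappa> x \<ge> \<kappa>0" and k0: "\<kappa>0 > 0"
  shows "bform (WGs \<Omega>) (aform \<Omega> \<kappa>)"
  by unfold_locales
     (auto intro: WGs_zero[OF op bd] WGs_add[OF op bd] WGs_scale[OF op bd] aform_sym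
       aform_pos[OF op bd kL kpos k0]
       simp: aform_add[OF op bd kL kpos k0] aform_scale[OF op bd kL kpos k0])

lemma sup_ratio:
  assumes BB: "bform W B" and V1: "V1 \<subseteq> W" and V2: "V2 \<subseteq> W"
    and g: "g = Sup {B v1 v2 / (sqrt (B v1 v1) * sqrt (B v2 v2)) | v1 v2. v1 \<in> V1 \<and> v2 \<in> V2}"
    and v1: "v1 \<in> V1" and v2: "v2 \<in> V2"
  shows "B v1 v2 \<le> g * sqrt (B v1 v1) * sqrt (B v2 v2)"
proof -
  interpret Bb: bform W B by (rule BB)
  let ?S = "{B v1 v2 / (sqrt (B v1 v1) * sqrt (B v2 v2)) | v1 v2. v1 \<in> V1 \<and> v2 \<in> V2}"
  have le1: "B a b / (sqrt (B a a) * sqrt (B b b)) \<le> 1" if "a \<in> W" "b \<in> W" for a b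
  proof -
    have cs: "\<bar>B a b\<bar> \<le> sqrt (B a a) * sqrt (B b b)" using Bb.CS[OF that] unfolding Bb.nrm_def .
    show ?thesis
    proof (cases "sqrt (B a a) * sqrt (B b b) > 0")
      case True
      have "B a b \<le> sqrt (B a a) * sqrt (B b b)" using cs by linarith
      then show ?thesis using True by (simp add: divide_le_eq_1_pos)
    next
      case False
      then have "sqrt (B a a) * sqrt (B b b) = 0" using Bb.Lpos[OF that(1)] Bb.Lpos[OF that(2)]
        by (metis mult_nonneg_nonneg not_less order_antisym real_sqrt_ge_zero)
      then show ?thesis by (metis div_by_0 zero_le_one)
    qed
  qed
  have bdd: "bdd_above ?S"
    unfolding bdd_above_def using le1 V1 V2 by blast
  have cs: "\<bar>B v1 v2\<bar> \<le> sqrt (B v1 v1) * sqrt (B v2 v2)"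
    using Bb.CS v1 v2 V1 V2 unfolding Bb.nrm_def by blast
  show ?thesis
  proof (cases "sqrt (B v1 v1) * sqrt (B v2 v2) > 0")
    case True
    have "B v1 v2 / (sqrt (B v1 v1) * sqrt (B v2 v2)) \<in> ?S" using v1 v2 by blast
    then have "B v1 v2 / (sqrt (B v1 v1) * sqrt (B v2 v2)) \<le> g" unfolding g using bdd by (rule cSup_upper)
    then show ?thesis using True by (simp add: divide_le_eq mult.assoc)
  next
    case False
    then have "sqrt (B v1 v1) * sqrt (B v2 v2) = 0" using Bb.Lpos v1 v2 V1 V2
      by (metis mult_nonneg_nonneg not_less order_antisym real_sqrt_ge_zero subsetD)
    then have "B v1 v2 = 0" using cs by (metis abs_le_zero_iff)
    then show ?thesis using \<open>sqrt (B v1 v1) * sqrt (B v2 v2) = 0\<close> by (metis mult.assoc mult_zero_right order_refl)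
  qed
qed

lemma sup_ratio_nonneg:
  assumes BB: "bform W B" and V1: "V1 \<subseteq> W" and V2: "V2 \<subseteq> W"
    and g: "g = Sup {B v1 v2 / (sqrt (B v1 v1) * sqrt (B v2 v2)) | v1 v2. v1 \<in> V1 \<and> v2 \<in> V2}"
    and z1: "(\<lambda>x. 0) \<in> V1" and z2: "(\<lambda>x. 0) \<in> V2"
  shows "g \<ge> 0"
proof -
  interpret Bb: bform W B by (rule BB)
  let ?S = "{B v1 v2 / (sqrt (B v1 v1) * sqrt (B v2 v2)) | v1 v2. v1 \<in> V1 \<and> v2 \<in> V2}"
  have le1: "x \<le> 1" if xS: "x \<in> ?S" for x
  proof -
    obtain a b where x: "x = B a b / (sqrt (B a a) * sqrt (B b b))" and ab: "a \<in> W" "b \<in> W"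
      using xS V1 V2 by blast
    have cs: "\<bar>B a b\<bar> \<le> sqrt (B a a) * sqrt (B b b)" using Bb.CS[OF ab] unfolding Bb.nrm_def .
    show ?thesis
    proof (cases "sqrt (B a a) * sqrt (B b b) > 0")
      case True
      have "B a b \<le> sqrt (B a a) * sqrt (B b b)" using cs by linarith
      then show ?thesis unfolding x using True by (simp add: divide_le_eq_1_pos)
    next
      case False
      then have "sqrt (B a a) * sqrt (B b b) = 0" using Bb.Lpos[OF ab(1)] Bb.Lpos[OF ab(2)]
        by (metis mult_nonneg_nonneg not_less order_antisym real_sqrt_ge_zero)
      then show ?thesis unfolding x by (metis div_by_0 zero_le_one)
    qed
  qed
  have "B (\<lambda>x. 0) (\<lambda>x. 0) / (sqrt (B (\<lambda>x. 0) (\<lambda>x. 0)) * sqrt (B (\<lambda>x. 0) (\<lambda>x. 0))) \<in> ?S"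
    using z1 z2 by blast
  moreover have "B (\<lambda>x. 0) (\<lambda>x. 0) = 0" using Bb.Lzero[OF Bb.W0] .
  ultimately have "0 \<in> ?S" by simp
  then show ?thesis unfolding g by (rule cSup_upper) (use le1 in \<open>auto simp: bdd_above_def\<close>)
qed


lemma alpha_bound:
  assumes LB: "bform W L" and AB: "bform W A"
    and null: "\<And>n. n \<in> W \<Longrightarrow> L n n = 0 \<Longrightarrow> A n n = 0"
    and fin: "finite B" and BW: "B \<subseteq> W"
    and V2sub: "V2 \<subseteq> {(\<lambda>x. \<Sum>b\<in>B. c b * b x) | c. True}" and V2W: "V2 \<subseteq> W"
    and al: "\<alpha> = Sup {sqrt (A v v) / sqrt (L v v) | v. v \<in> V2}"
    and v: "v \<in> V2"
  shows "A v v \<le> \<alpha>\<^sup>2 * L v v"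
proof -
  interpret Lb: bform W L by (rule LB)
  interpret Ab: bform W A by (rule AB)
  obtain C where C: "\<forall>c. sqrt (A (\<lambda>x. \<Sum>b\<in>B. c b * b x) (\<lambda>x. \<Sum>b\<in>B. c b * b x))
      \<le> C * sqrt (L (\<lambda>x. \<Sum>b\<in>B. c b * b x) (\<lambda>x. \<Sum>b\<in>B. c b * b x))"
    using span_bound[OF LB AB null fin BW] by blast
  have Cv: "sqrt (A w w) \<le> C * sqrt (L w w)" if "w \<in> V2" for w
    using that V2sub C by blast
  let ?S = "{sqrt (A v v) / sqrt (L v v) | v. v \<in> V2}"
  have bdd: "bdd_above ?S"
    unfolding bdd_above_def
  proof (intro exI[of _ "max C 0"] ballI)
    fix x assume "x \<in> ?S"
    then obtain w where x: "x = sqrt (A w w) / sqrt (L w w)" and w: "w \<in> V2" by blast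
    show "x \<le> max C 0"
    proof (cases "sqrt (L w w) > 0")
      case True
      then have "sqrt (A w w) / sqrt (L w w) \<le> C" using Cv[OF w] by (simp add: divide_le_eq)
      then show ?thesis unfolding x by simp
    next
      case False
      then have "sqrt (L w w) = 0" using Lb.Lpos w V2W by (metis not_less order_antisym real_sqrt_ge_zero subsetD)
      then show ?thesis unfolding x by (metis div_by_0 max.cobounded2)
    qed
  qed
  have vW: "v \<in> W" using v V2W by blast
  show ?thesis
  proof (cases "sqrt (L v v) > 0")
    case True
    have "sqrt (A v v) / sqrt (L v v) \<in> ?S" using v by blast
    then have "sqrt (A v v) / sqrt (L v v) \<le> \<alpha>" unfolding al using bdd by (rule cSup_upper)
    then have le: "sqrt (A v v) \<le> \<alpha> * sqrt (L v v)" using True by (simp add: divide_le_eq)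
    have "(sqrt (A v v))\<^sup>2 \<le> (\<alpha> * sqrt (L v v))\<^sup>2"
      by (rule power_mono[OF le]) (use Ab.Lpos[OF vW] in simp)
    then show ?thesis using Ab.Lpos[OF vW] Lb.Lpos[OF vW] by (simp add: power_mult_distrib)
  next
    case False
    then have "L v v = 0" using Lb.Lpos[OF vW] by simp
    then show ?thesis using null[OF vW] by simp
  qed
qed


theorem mainTheorem2:
  fixes \<Omega> :: "'a::euclidean_space set"
    and \<kappa> :: "'a \<Rightarrow> real" and \<kappa>0 :: real
    and VH VH1 VH2 :: "('a \<Rightarrow> real) set"
    and \<gamma> \<gamma>a \<alpha> \<tau> :: real and N :: nat
    and u1 u2 :: "nat \<Rightarrow> 'a \<Rightarrow> real"
  assumes dom: "bounded_domain \<Omega>"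
    and kappa_Linf: "Linf_on \<Omega> \<kappa>"
    and kappa_lb: "\<kappa>0 > 0" "AE x in lebesgue. x \<in> \<Omega> \<longrightarrow> \<kappa> x \<ge> \<kappa>0"
    and VH_fd: "fin_dim_fun_space VH" and VH_sub: "VH \<subseteq> H10 \<Omega>"
    and VH1_sub: "fun_subspace VH1" and VH2_sub: "fun_subspace VH2"
    and VH_sum: "VH = fun_sum_space VH1 VH2"
    and gamma_def: "\<gamma> = Sup {l2ip \<Omega> v1 v2 / (l2norm \<Omega> v1 * l2norm \<Omega> v2) | v1 v2. v1 \<in> VH1 \<and> v2 \<in> VH2}"
    and gamma_a_def: "\<gamma>a = Sup {aform \<Omega> \<kappa> v1 v2 / (anorm \<Omega> \<kappa> v1 * anorm \<Omega> \<kappa> v2) | v1 v2. v1 \<in> VH1 \<and> v2 \<in> VH2}"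
    and alpha_def: "\<alpha> = Sup {anorm \<Omega> \<kappa> v2 / l2norm \<Omega> v2 | v2. v2 \<in> VH2}"
    and gamma_lt: "\<gamma> < 1" and gamma_a_lt: "\<gamma>a < 1"
    and tau_pos: "\<tau> > 0" and N_ge: "N \<ge> 2"
    and u1_in: "\<And>n. n \<le> N \<Longrightarrow> u1 n \<in> VH1"
    and u2_in: "\<And>n. n \<le> N \<Longrightarrow> u2 n \<in> VH2"
    and eq1: "\<And>n w. 1 \<le> n \<Longrightarrow> n \<le> N - 1 \<Longrightarrow> w \<in> VH1 \<Longrightarrow>
       l2ip \<Omega> (\<lambda>x. (u1 (n+1) x + u2 (n+1) x) - 2 * (u1 n x + u2 n x) + (u1 (n-1) x + u2 (n-1) x)) w
       + \<tau>\<^sup>2 / 2 * aform \<Omega> \<kappa> (\<lambda>x. u1 (n+1) x + u1 (n-1) x + 2 * u2 n x) w = 0"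
    and eq2: "\<And>n w. 1 \<le> n \<Longrightarrow> n \<le> N - 1 \<Longrightarrow> w \<in> VH2 \<Longrightarrow>
       l2ip \<Omega> (\<lambda>x. (u1 (n+1) x + u2 (n+1) x) - 2 * (u1 n x + u2 n x) + (u1 (n-1) x + u2 (n-1) x)) w
       + \<tau>\<^sup>2 * aform \<Omega> \<kappa> (\<lambda>x. u1 n x + u2 n x) w = 0"
    and cfl: "\<tau>\<^sup>2 * \<alpha>\<^sup>2 \<le> 2 * (1 - \<gamma>)"
  shows "\<forall>n. n \<le> N - 1 \<longrightarrow>
     (1 - \<gamma>\<^sup>2 - \<alpha>\<^sup>2 * \<tau>\<^sup>2 / 2) * (l2norm \<Omega> (\<lambda>x. u2 (n+1) x - u2 n x))\<^sup>2
     + \<tau>\<^sup>2 * (1 - \<gamma>a) / 2 *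
        ((anorm \<Omega> \<kappa> (u1 (n+1)))\<^sup>2 + (anorm \<Omega> \<kappa> (u1 n))\<^sup>2
         + (anorm \<Omega> \<kappa> (u2 (n+1)))\<^sup>2 + (anorm \<Omega> \<kappa> (u2 n))\<^sup>2)
     \<le> (l2norm \<Omega> (\<lambda>x. (u1 1 x + u2 1 x) - (u1 0 x + u2 0 x)))\<^sup>2
        + \<tau>\<^sup>2 / 2 * ((anorm \<Omega> \<kappa> (u1 1))\<^sup>2 + (anorm \<Omega> \<kappa> (u1 0))\<^sup>2
                    + (anorm \<Omega> \<kappa> (u2 1))\<^sup>2 + (anorm \<Omega> \<kappa> (u2 0))\<^sup>2)
        + \<tau>\<^sup>2 * aform \<Omega> \<kappa> (u2 1) (u1 0) + \<tau>\<^sup>2 * aform \<Omega> \<kappa> (u1 1) (u2 0)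
        - \<tau>\<^sup>2 / 2 * (anorm \<Omega> \<kappa> (\<lambda>x. u2 1 x - u2 0 x))\<^sup>2"
proof -
  have op: "open \<Omega>" and bd: "bounded \<Omega>" using dom unfolding bounded_domain_def by auto
  have LB: "bform (WGs \<Omega>) (l2ip \<Omega>)" by (rule bform_l2[OF op bd])
  have AB: "bform (WGs \<Omega>) (aform \<Omega> \<kappa>)" by (rule bform_a[OF op bd kappa_Linf kappa_lb(2) kappa_lb(1)])
  interpret Lb: bform "WGs \<Omega>" "l2ip \<Omega>" by (rule LB)
  interpret Ab: bform "WGs \<Omega>" "aform \<Omega> \<kappa>" by (rule AB)
  obtain B where fin: "finite B" and BVH: "B \<subseteq> VH" and VHeq: "VH = {(\<lambda>x. \<Sum>b\<in>B. c b * b x) | c. True}"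
    using VH_fd unfolding fin_dim_fun_space_def by blast
  have VHW: "VH \<subseteq> WGs \<Omega>" using VH_sub H10_WGs[OF op bd] by blast
  have z1: "(\<lambda>x. 0) \<in> VH1" and z2: "(\<lambda>x. 0) \<in> VH2"
    using VH1_sub VH2_sub unfolding fun_subspace_def by auto
  have V1VH: "VH1 \<subseteq> VH"
  proof
    fix v assume "v \<in> VH1"
    then have "(\<lambda>x. v x + 0) \<in> fun_sum_space VH1 VH2" unfolding fun_sum_space_def
      by (intro CollectI exI[of _ v] exI[of _ "\<lambda>x. 0"]) (use z2 in simp)
    then show "v \<in> VH" using VH_sum by simp
  qed
  have V2VH: "VH2 \<subseteq> VH"
  proof
    fix v assume "v \<in> VH2"
    then have "(\<lambda>x. 0 + v x) \<in> fun_sum_space VH1 VH2" unfolding fun_sum_space_def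
      by (intro CollectI exI[of _ "\<lambda>x. 0"] exI[of _ v]) (use z1 in simp)
    then show "v \<in> VH" using VH_sum by simp
  qed
  have V1W: "VH1 \<subseteq> WGs \<Omega>" and V2W: "VH2 \<subseteq> WGs \<Omega>" using V1VH V2VH VHW by auto
  have sub_diff: "(\<lambda>x. f x - g x) \<in> V" if V: "fun_subspace V" and f: "f \<in> V" and g: "g \<in> V" for V f g
  proof -
    have neg: "(\<lambda>x. (-1) * g x) \<in> V" using V g unfolding fun_subspace_def by blast
    have add: "\<forall>u\<in>V. \<forall>v\<in>V. (\<lambda>x. u x + v x) \<in> V" using V unfolding fun_subspace_def by blast
    have "(\<lambda>x. f x + (-1) * g x) \<in> V" using bspec[OF bspec[OF add f] neg] by simp
    then show ?thesis by simp
  qed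
  have sub_neg: "(\<lambda>x. (-1) * g x) \<in> V" if V: "fun_subspace V" and g: "g \<in> V" for V g
    using V g unfolding fun_subspace_def by blast
  have u1W: "u1 n \<in> WGs \<Omega>" if "n \<le> N" for n using u1_in[OF that] V1W by blast
  have u2W: "u2 n \<in> WGs \<Omega>" if "n \<le> N" for n using u2_in[OF that] V2W by blast
  have null: "\<And>n. n \<in> WGs \<Omega> \<Longrightarrow> l2ip \<Omega> n n = 0 \<Longrightarrow> aform \<Omega> \<kappa> n n = 0"
    by (rule aform_null[OF op bd kappa_Linf kappa_lb(2) kappa_lb(1)])
  have P1: "- l2ip \<Omega> v1 v2 \<le> \<gamma> * sqrt (l2ip \<Omega> v1 v1) * sqrt (l2ip \<Omega> v2 v2)" if "v1 \<in> VH1" "v2 \<in> VH2" for v1 v2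
  proof -
    have n2: "(\<lambda>x. (-1) * v2 x) \<in> VH2" by (rule sub_neg[OF VH2_sub that(2)])
    have w1: "v1 \<in> WGs \<Omega>" and w2: "v2 \<in> WGs \<Omega>" using that V1W V2W by auto
    have "l2ip \<Omega> v1 (\<lambda>x. (-1) * v2 x) \<le> \<gamma> * sqrt (l2ip \<Omega> v1 v1) * sqrt (l2ip \<Omega> (\<lambda>x. (-1) * v2 x) (\<lambda>x. (-1) * v2 x))"
      by (rule sup_ratio[OF LB V1W V2W _ that(1) n2]) (simp add: gamma_def l2norm_def)
    moreover have "l2ip \<Omega> v1 (\<lambda>x. (-1) * v2 x) = - l2ip \<Omega> v1 v2" using Lb.Lscale2[OF w2 w1, where c="-1"] by simp
    moreover have "l2ip \<Omega> (\<lambda>x. (-1) * v2 x) (\<lambda>x. (-1) * v2 x) = l2ip \<Omega> v2 v2"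
      using Lb.Lscale2[OF w2 Lb.Wscale[OF w2, where c="-1"], where c="-1"] Lb.Lscale[OF w2 w2, where c="-1"] by simp
    ultimately show ?thesis by simp
  qed
  have P2: "- aform \<Omega> \<kappa> v1 v2 \<le> \<gamma>a * sqrt (aform \<Omega> \<kappa> v1 v1) * sqrt (aform \<Omega> \<kappa> v2 v2)" if "v1 \<in> VH1" "v2 \<in> VH2" for v1 v2
  proof -
    have n2: "(\<lambda>x. (-1) * v2 x) \<in> VH2" by (rule sub_neg[OF VH2_sub that(2)])
    have w1: "v1 \<in> WGs \<Omega>" and w2: "v2 \<in> WGs \<Omega>" using that V1W V2W by auto
    have "aform \<Omega> \<kappa> v1 (\<lambda>x. (-1) * v2 x) \<le> \<gamma>a * sqrt (aform \<Omega> \<kappa> v1 v1) * sqrt (aform \<Omega> \<kappa> (\<lambda>x. (-1) * v2 x) (\<lambda>x. (-1) * v2 x))"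
      by (rule sup_ratio[OF AB V1W V2W _ that(1) n2]) (simp add: gamma_a_def anorm_def)
    moreover have "aform \<Omega> \<kappa> v1 (\<lambda>x. (-1) * v2 x) = - aform \<Omega> \<kappa> v1 v2" using Ab.Lscale2[OF w2 w1, where c="-1"] by simp
    moreover have "aform \<Omega> \<kappa> (\<lambda>x. (-1) * v2 x) (\<lambda>x. (-1) * v2 x) = aform \<Omega> \<kappa> v2 v2"
      using Ab.Lscale2[OF w2 Ab.Wscale[OF w2, where c="-1"], where c="-1"] Ab.Lscale[OF w2 w2, where c="-1"] by simp
    ultimately show ?thesis by simp
  qed
  have ga: "\<gamma>a \<ge> 0"
    by (rule sup_ratio_nonneg[OF AB V1W V2W _ z1 z2]) (simp add: gamma_a_def anorm_def)
  have P3: "aform \<Omega> \<kappa> v v \<le> \<alpha>\<^sup>2 * l2ip \<Omega> v v" if "v \<in> VH2" for v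
    by (rule alpha_bound[OF LB AB null fin _ _ V2W _ that])
       (use BVH VHW V2VH VHeq in \<open>auto simp: alpha_def anorm_def l2norm_def\<close>)
  have cons: "En (l2ip \<Omega>) (aform \<Omega> \<kappa>) \<tau> u1 u2 (Suc k) = En (l2ip \<Omega>) (aform \<Omega> \<kappa>) \<tau> u1 u2 k"
    if k: "Suc k \<le> N - 1" for k
  proof (rule conservation[OF LB AB])
    show "u1 k \<in> WGs \<Omega>" "u1 (Suc k) \<in> WGs \<Omega>" "u1 (Suc (Suc k)) \<in> WGs \<Omega>"
         "u2 k \<in> WGs \<Omega>" "u2 (Suc k) \<in> WGs \<Omega>" "u2 (Suc (Suc k)) \<in> WGs \<Omega>"
      using k by (auto intro: u1W u2W)
    have w1: "(\<lambda>x. u1 (Suc k + 1) x - u1 (Suc k - 1) x) \<in> VH1"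
      by (rule sub_diff[OF VH1_sub]) (use k in \<open>auto intro: u1_in\<close>)
    have w2: "(\<lambda>x. u2 (Suc k + 1) x - u2 (Suc k - 1) x) \<in> VH2"
      by (rule sub_diff[OF VH2_sub]) (use k in \<open>auto intro: u2_in\<close>)
    show "l2ip \<Omega> (\<lambda>x. u1 (Suc k + 1) x + u2 (Suc k + 1) x - 2 * (u1 (Suc k) x + u2 (Suc k) x) + (u1 (Suc k - 1) x + u2 (Suc k - 1) x))
       (\<lambda>x. u1 (Suc k + 1) x - u1 (Suc k - 1) x) +
      \<tau>\<^sup>2 / 2 * aform \<Omega> \<kappa> (\<lambda>x. u1 (Suc k + 1) x + u1 (Suc k - 1) x + 2 * u2 (Suc k) x) (\<lambda>x. u1 (Suc k + 1) x - u1 (Suc k - 1) x) = 0"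
      by (rule eq1[OF _ k w1]) simp
    show "l2ip \<Omega> (\<lambda>x. u1 (Suc k + 1) x + u2 (Suc k + 1) x - 2 * (u1 (Suc k) x + u2 (Suc k) x) + (u1 (Suc k - 1) x + u2 (Suc k - 1) x))
       (\<lambda>x. u2 (Suc k + 1) x - u2 (Suc k - 1) x) +
      \<tau>\<^sup>2 * aform \<Omega> \<kappa> (\<lambda>x. u1 (Suc k) x + u2 (Suc k) x) (\<lambda>x. u2 (Suc k + 1) x - u2 (Suc k - 1) x) = 0"
      by (rule eq2[OF _ k w2]) simp
  qed
  have cons0: "n \<le> N - 1 \<Longrightarrow> En (l2ip \<Omega>) (aform \<Omega> \<kappa>) \<tau> u1 u2 n = En (l2ip \<Omega>) (aform \<Omega> \<kappa>) \<tau> u1 u2 0" for n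
  proof (induction n)
    case 0 then show ?case by simp
  next
    case (Suc k) then show ?case using cons[of k] by simp
  qed
  have sqL: "(l2norm \<Omega> f)\<^sup>2 = l2ip \<Omega> f f" for f
    unfolding l2norm_def using l2ip_pos[of \<Omega> f] by simp
  have sqA: "(anorm \<Omega> \<kappa> f)\<^sup>2 = aform \<Omega> \<kappa> f f" for f
    unfolding anorm_def using aform_pos[OF op bd kappa_Linf kappa_lb(2) kappa_lb(1), of f] by simp
  show ?thesis
  proof (intro allI impI)
    fix n assume n: "n \<le> N - 1"
    have nN: "n \<le> N" "Suc n \<le> N" using n N_ge by auto
    have lb: "(1 - \<gamma>\<^sup>2 - \<alpha>\<^sup>2 * \<tau>\<^sup>2 / 2) * l2ip \<Omega> (\<lambda>x. u2 (Suc n) x - u2 n x) (\<lambda>x. u2 (Suc n) x - u2 n x)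
     + \<tau>\<^sup>2 * (1 - \<gamma>a) / 2 * (aform \<Omega> \<kappa> (u1 (Suc n)) (u1 (Suc n)) + aform \<Omega> \<kappa> (u1 n) (u1 n)
        + aform \<Omega> \<kappa> (u2 (Suc n)) (u2 (Suc n)) + aform \<Omega> \<kappa> (u2 n) (u2 n))
     \<le> En (l2ip \<Omega>) (aform \<Omega> \<kappa>) \<tau> u1 u2 n"
    proof (rule lower_bound[OF LB AB])
      show "u1 n \<in> WGs \<Omega>" "u1 (Suc n) \<in> WGs \<Omega>" "u2 n \<in> WGs \<Omega>" "u2 (Suc n) \<in> WGs \<Omega>"
        using nN by (auto intro: u1W u2W)
      have d1: "(\<lambda>x. u1 (Suc n) x - u1 n x) \<in> VH1" by (rule sub_diff[OF VH1_sub]) (use nN in \<open>auto intro: u1_in\<close>)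
      have d2: "(\<lambda>x. u2 (Suc n) x - u2 n x) \<in> VH2" by (rule sub_diff[OF VH2_sub]) (use nN in \<open>auto intro: u2_in\<close>)
      show "- l2ip \<Omega> (\<lambda>x. u1 (Suc n) x - u1 n x) (\<lambda>x. u2 (Suc n) x - u2 n x)
        \<le> \<gamma> * sqrt (l2ip \<Omega> (\<lambda>x. u1 (Suc n) x - u1 n x) (\<lambda>x. u1 (Suc n) x - u1 n x))
            * sqrt (l2ip \<Omega> (\<lambda>x. u2 (Suc n) x - u2 n x) (\<lambda>x. u2 (Suc n) x - u2 n x))"
        by (rule P1[OF d1 d2])
      show "- aform \<Omega> \<kappa> (u1 n) (u2 (Suc n)) \<le> \<gamma>a * sqrt (aform \<Omega> \<kappa> (u1 n) (u1 n)) * sqrt (aform \<Omega> \<kappa> (u2 (Suc n)) (u2 (Suc n)))"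
        by (rule P2) (use nN in \<open>auto intro: u1_in u2_in\<close>)
      show "- aform \<Omega> \<kappa> (u1 (Suc n)) (u2 n) \<le> \<gamma>a * sqrt (aform \<Omega> \<kappa> (u1 (Suc n)) (u1 (Suc n))) * sqrt (aform \<Omega> \<kappa> (u2 n) (u2 n))"
        by (rule P2) (use nN in \<open>auto intro: u1_in u2_in\<close>)
      show "\<gamma>a \<ge> 0" by (rule ga)
      show "aform \<Omega> \<kappa> (\<lambda>x. u2 (Suc n) x - u2 n x) (\<lambda>x. u2 (Suc n) x - u2 n x)
        \<le> \<alpha>\<^sup>2 * l2ip \<Omega> (\<lambda>x. u2 (Suc n) x - u2 n x) (\<lambda>x. u2 (Suc n) x - u2 n x)"
        by (rule P3[OF d2])
    qed
    also have "\<dots> = En (l2ip \<Omega>) (aform \<Omega> \<kappa>) \<tau> u1 u2 0" by (rule cons0[OF n])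
    finally show "(1 - \<gamma>\<^sup>2 - \<alpha>\<^sup>2 * \<tau>\<^sup>2 / 2) * (l2norm \<Omega> (\<lambda>x. u2 (n+1) x - u2 n x))\<^sup>2
     + \<tau>\<^sup>2 * (1 - \<gamma>a) / 2 *
        ((anorm \<Omega> \<kappa> (u1 (n+1)))\<^sup>2 + (anorm \<Omega> \<kappa> (u1 n))\<^sup>2
         + (anorm \<Omega> \<kappa> (u2 (n+1)))\<^sup>2 + (anorm \<Omega> \<kappa> (u2 n))\<^sup>2)
     \<le> (l2norm \<Omega> (\<lambda>x. (u1 1 x + u2 1 x) - (u1 0 x + u2 0 x)))\<^sup>2
        + \<tau>\<^sup>2 / 2 * ((anorm \<Omega> \<kappa> (u1 1))\<^sup>2 + (anorm \<Omega> \<kappa> (u1 0))\<^sup>2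
                    + (anorm \<Omega> \<kappa> (u2 1))\<^sup>2 + (anorm \<Omega> \<kappa> (u2 0))\<^sup>2)
        + \<tau>\<^sup>2 * aform \<Omega> \<kappa> (u2 1) (u1 0) + \<tau>\<^sup>2 * aform \<Omega> \<kappa> (u1 1) (u2 0)
        - \<tau>\<^sup>2 / 2 * (anorm \<Omega> \<kappa> (\<lambda>x. u2 1 x - u2 0 x))\<^sup>2"
      by (simp add: sqL sqA En_def)
  qed
qed


end
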